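(* Let $\mathbb{X}=\{\mathbf{x}_1,\dots,\mathbf{x}_N\}\subset\mathbb{R}^d$ consist of distinct points, let $P=\sum_kp_k\delta_{\mathbf{x}_k}$ with $p_k>0$, $\sum_kp_k=1$, and let $Q$ be a probability on $\mathbb{R}^d$ with $Q\ll\ell_d$ whose support is connected with Lebesgue negligible boundary. Let $c(\mathbf{x},\mathbf{y})=h(\mathbf{x}-\mathbf{y})$ where $h:\mathbb{R}^d\to[0,\infty)$ is differentiable and satisfies (A1)–(A3), and assume $\int c(\mathbf{x}_i,\mathbf{y})\,dQ(\mathbf{y})<\infty$ for all $i=1,\dots,N$. Then $\operatorname{Opt}^0_c(P,Q)$ is a singleton.
   Context: $\ell_d$ is Lebesgue measure. (A1): $h$ is strictly convex on $\mathbb{R}^d$. (A2): given $r>0$ and $\theta\in(0,\pi)$ there exists $M=M(r,\theta)>0$ such that for every $\mathbf{p}\in\mathbb{R}^d$ with $|\mathbf{p}|>M$ one can find $\mathbf{z}\neq0$ such that on the cone $K(r,\theta,\mathbf{z},\mathbf{p})=\{\mathbf{x}\in\mathbb{R}^d: |\mathbf{x}-\mathbf{p}||\mathbf{z}|\cos(\theta/2)\leq\langle\mathbf{z},\mathbf{x}-\mathbf{p}\rangle\leq r|\mathbf{z}|\}$ (with vertex $\mathbf{p}$) the function $h$ attains its maximum at $\mathbf{p}$. (A3): $\lim_{|\mathbf{x}|\to\infty}h(\mathbf{x})/|\mathbf{x}|=\infty$. $\mathcal{T}_c(P,Q)=\inf_{\pi\in\Pi(P,Q)}\int c\,d\pi$;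 $g_c(P,Q,\mathbf{z})=\sum_iz_ip_i+\int\min_i\{c(\mathbf{x}_i,\mathbf{y})-z_i\}dQ(\mathbf{y})$; $\operatorname{Opt}^0_c(P,Q)=\{\mathbf{z}\in\mathbb{R}^N:\mathcal{T}_c(P,Q)=g_c(P,Q,\mathbf{z}),\ z_1=0\}$. *)

theory Defs
  imports "HOL-Probability.Probability"
begin

definition strictly_convex_on :: "'a::real_vector set \<Rightarrow> ('a \<Rightarrow> real) \<Rightarrow> bool" where
  "strictly_convex_on S f \<longleftrightarrow>
     (\<forall>x\<in>S. \<forall>y\<in>S. x \<noteq> y \<longrightarrow> (\<forall>t::real. 0 < t \<and> t < 1 \<longrightarrow>
        f ((1 - t) *\<^sub>R x + t *\<^sub>R y) < (1 - t) * f x + t * f y))"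

definition cone_K :: "real \<Rightarrow> real \<Rightarrow> 'a::euclidean_space \<Rightarrow> 'a \<Rightarrow> 'a set" where
  "cone_K r \<theta> z p = {x. norm (x - p) * norm z * cos (\<theta> / 2) \<le> inner z (x - p)
                         \<and> inner z (x - p) \<le> r * norm z}"

definition cond_A2 :: "('a::euclidean_space \<Rightarrow> real) \<Rightarrow> bool" where
  "cond_A2 h \<longleftrightarrow> (\<forall>r>0. \<forall>\<theta>. 0 < \<theta> \<and> \<theta> < pi \<longrightarrow>
     (\<exists>M>0. \<forall>p. norm p > M \<longrightarrow>
        (\<exists>z. z \<noteq> 0 \<and> (\<forall>x\<in>cone_K r \<theta> z p. h x \<le> h p))))"

definition measure_support :: "'a::metric_space measure \<Rightarrow> 'a set" where
  "measure_support Q = {x. \<forall>e>0. emeasure Q (ball x e) > 0}"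

definition discrete_measure :: "nat \<Rightarrow> (nat \<Rightarrow> 'a::topological_space) \<Rightarrow> (nat \<Rightarrow> real) \<Rightarrow> 'a measure" where
  "discrete_measure N x p = measure_of UNIV (sets borel)
     (\<lambda>A. \<Sum>k\<in>{1..N}. if x k \<in> A then ennreal (p k) else 0)"

definition couplings :: "'a::euclidean_space measure \<Rightarrow> 'a measure \<Rightarrow> ('a \<times> 'a) measure set" where
  "couplings P Q = {\<pi>. sets \<pi> = sets borel \<and> prob_space \<pi> \<and>
      (\<forall>A\<in>sets borel. emeasure \<pi> (A \<times> UNIV) = emeasure P A \<and> emeasure \<pi> (UNIV \<times> A) = emeasure Q A)}"

definition OT_cost :: "('a::euclidean_space \<Rightarrow> 'a \<Rightarrow> real) \<Rightarrow> 'a measure \<Rightarrow> 'a measure \<Rightarrow> ennreal" where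
  "OT_cost c P Q = (INF \<pi>\<in>couplings P Q. \<integral>\<^sup>+ xy. ennreal (c (fst xy) (snd xy)) \<partial>\<pi>)"

definition g_dual :: "('a::euclidean_space \<Rightarrow> 'a \<Rightarrow> real) \<Rightarrow> nat \<Rightarrow> (nat \<Rightarrow> 'a) \<Rightarrow> (nat \<Rightarrow> real)
                        \<Rightarrow> 'a measure \<Rightarrow> (nat \<Rightarrow> real) \<Rightarrow> real" where
  "g_dual c N x p Q z = (\<Sum>i\<in>{1..N}. z i * p i)
     + (\<integral>y. Min ((\<lambda>i. c (x i) y - z i) ` {1..N}) \<partial>Q)"

definition Opt0 :: "('a::euclidean_space \<Rightarrow> 'a \<Rightarrow> real) \<Rightarrow> nat \<Rightarrow> (nat \<Rightarrow> 'a) \<Rightarrow> (nat \<Rightarrow> real)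
                    \<Rightarrow> 'a measure \<Rightarrow> (nat \<Rightarrow> real) set" where
  "Opt0 c N x p Q = {z. z \<in> extensional {1..N} \<and> z 1 = 0 \<and>
      OT_cost c (discrete_measure N x p) Q < \<infinity> \<and>
      enn2real (OT_cost c (discrete_measure N x p) Q) = g_dual c N x p Q z}"

end

theory Submission
  imports Defs
begin

lemma level_null:
  fixes f :: "'a::euclidean_space \<Rightarrow> real"
  assumes cont: "continuous_on UNIV f" and u: "u \<noteq> 0"
    and dec: "\<And>y s. s > 0 \<Longrightarrow> f (y + s *\<^sub>R u) < f y"
  shows "{y. f y = t} \<in> null_sets lborel"
proof -
  define E where "E = {y. f y = t}"
  have clE: "closed E" unfolding E_def
    by (intro closed_Collect_eq cont continuous_on_const)
  define B where "B n = E \<inter> cball 0 (real n)" for n :: nat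
  have Bl: "B n \<in> lmeasurable" for n
    unfolding B_def using clE by (intro lmeasurable_compact closed_Int_compact) auto
  define T where "T n k = (+) ((1 / real (Suc k)) *\<^sub>R u) ` B n" for n k :: nat
  have Tl: "T n k \<in> lmeasurable" for n k
    unfolding T_def using Bl by (rule measurable_translation)
  have Tm: "measure lebesgue (T n k) = measure lebesgue (B n)" for n k
    unfolding T_def by (rule measure_translation)
  have disj: "disjoint_family_on (T n) {..<K}" for n K
  proof (unfold disjoint_family_on_def, intro ballI impI)
    fix k m assume km: "k \<in> {..<K}" "m \<in> {..<K}" "k \<noteq> m"
    show "T n k \<inter> T n m = {}"
    proof (rule ccontr)
      assume "T n k \<inter> T n m \<noteq> {}"
      then obtain b1 b2 where b: "b1 \<in> E" "b2 \<in> E"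
        "(1 / real (Suc k)) *\<^sub>R u + b1 = (1 / real (Suc m)) *\<^sub>R u + b2"
        unfolding T_def B_def by auto
      define s where "s = 1 / real (Suc k) - 1 / real (Suc m)"
      have s0: "s \<noteq> 0" using km(3) unfolding s_def
        by (auto simp: field_simps) (smt (verit) of_nat_0_le_iff mult_nonneg_nonneg)
      have b2: "b2 = b1 + s *\<^sub>R u" using b(3) unfolding s_def
        by (simp add: algebra_simps)
      show False
      proof (cases "s > 0")
        case True
        then have "f b2 < f b1" using dec[of s b1] b2 by simp
        then show ?thesis using b unfolding E_def by simp
      next
        case False
        then have "- s > 0" using s0 by simp
        then have "f (b2 + (- s) *\<^sub>R u) < f b2" by (rule dec)
        moreover have "b2 + (- s) *\<^sub>R u = b1" using b2 by (simp add: algebra_simps)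
        ultimately show ?thesis using b unfolding E_def by simp
      qed
    qed
  qed
  have Tsub: "T n k \<subseteq> cball 0 (real n + norm u)" for n k
  proof
    fix y assume "y \<in> T n k"
    then obtain b where b: "b \<in> B n" "y = (1 / real (Suc k)) *\<^sub>R u + b" unfolding T_def by auto
    have "norm y \<le> norm ((1 / real (Suc k)) *\<^sub>R u) + norm b" using b norm_triangle_ineq by blast
    also have "norm ((1 / real (Suc k)) *\<^sub>R u) \<le> norm u"
      by (simp add: field_simps)
    also have "norm b \<le> real n" using b unfolding B_def by auto
    finally show "y \<in> cball 0 (real n + norm u)" by (simp add: add.commute)
  qed
  define C where "C n = measure lebesgue (cball (0::'a) (real n + norm u))" for n
  have bound: "real K * measure lebesgue (B n) \<le> C n" for n K
  proof -
    have "real K * measure lebesgue (B n) = (\<Sum>k<K. measure lebesgue (T n k))"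
      by (simp add: Tm)
    also have "\<dots> = measure lebesgue (\<Union>k<K. T n k)"
      proof (rule measure_finite_Union[symmetric])
      show "T n ` {..<K} \<subseteq> sets lebesgue" using Tl by (auto intro: fmeasurableD)
      show "emeasure lebesgue (T n k) \<noteq> \<infinity>" for k
        using Tl[of n k] unfolding fmeasurable_def by (metis (no_types, lifting) mem_Collect_eq less_irrefl)
    qed (use disj in auto)
    also have "\<dots> \<le> C n" unfolding C_def
      using Tsub Tl by (intro measure_mono_fmeasurable) (auto intro!: fmeasurableD)
    finally show ?thesis .
  qed
  have B0: "measure lebesgue (B n) = 0" for n
  proof (rule ccontr)
    assume ne: "measure lebesgue (B n) \<noteq> 0"
    then have pos: "measure lebesgue (B n) > 0" using measure_nonneg[of lebesgue "B n"] by linarith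
    obtain K :: nat where K: "C n / measure lebesgue (B n) < real K" using reals_Archimedean2 by blast
    then have "C n < real K * measure lebesgue (B n)" using pos by (simp add: field_simps)
    then show False using bound[of K n] by simp
  qed
  have Bnull: "B n \<in> null_sets lebesgue" for n
  proof -
    have f: "emeasure lebesgue (B n) \<noteq> \<top>"
      using Bl[of n] by (rule fmeasurableD2)
    have "emeasure lebesgue (B n) = 0"
      using emeasure_eq_ennreal_measure[OF f] B0[of n] by simp
    then show ?thesis using Bl[of n] fmeasurableD by (auto intro: null_setsI)
  qed
  have "E = (\<Union>n. B n)"
  proof
    show "E \<subseteq> (\<Union>n. B n)"
    proof
      fix y assume "y \<in> E"
      obtain n :: nat where "norm y \<le> real n" using real_arch_simple by blast
      then show "y \<in> (\<Union>n. B n)" using \<open>y \<in> E\<close> unfolding B_def by auto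
    qed
  qed (auto simp: B_def)
  then have "E \<in> null_sets lebesgue" using Bnull by auto
  moreover have "E \<in> sets lborel" using clE by simp
  ultimately show ?thesis unfolding E_def[symmetric]
    using null_sets_completion_iff by blast
qed


locale otset =
  fixes N :: nat and x :: "nat \<Rightarrow> 'a::euclidean_space" and p :: "nat \<Rightarrow> real"
    and Q :: "'a measure" and h :: "'a \<Rightarrow> real"
  assumes N: "N \<ge> 1"
    and distinct: "inj_on x {1..N}"
    and p_pos: "\<forall>k\<in>{1..N}. p k > 0"
    and p_sum: "(\<Sum>k\<in>{1..N}. p k) = 1"
    and Q_prob: "prob_space Q"
    and Q_borel: "sets Q = sets borel"
    and Q_ac: "absolutely_continuous lborel Q"
    and supp_conn: "connected (measure_support Q)"
    and h_nonneg: "\<forall>v. h v \<ge> 0"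
    and h_cont: "continuous_on UNIV h"
    and A1: "strictly_convex_on UNIV h"
    and integr: "\<forall>i\<in>{1..N}. integrable Q (\<lambda>y. h (x i - y))"
begin

definition c :: "nat \<Rightarrow> 'a \<Rightarrow> real" where "c i y = h (x i - y)"
definition phi :: "(nat \<Rightarrow> real) \<Rightarrow> 'a \<Rightarrow> real" where
  "phi z y = Min ((\<lambda>i. c i y - z i) ` {1..N})"
definition g :: "(nat \<Rightarrow> real) \<Rightarrow> real" where
  "g z = g_dual (\<lambda>u v. h (u - v)) N x p Q z"
definition ties :: "(nat \<Rightarrow> real) \<Rightarrow> 'a set" where
  "ties z = {y. \<exists>i\<in>{1..N}. \<exists>j\<in>{1..N}. i \<noteq> j \<and> c i y - z i = c j y - z j}"
definition S :: "nat \<Rightarrow> (nat \<Rightarrow> real) \<Rightarrow> 'a set" where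
  "S i z = {y. \<forall>j\<in>{1..N}. j \<noteq> i \<longrightarrow> c i y - z i < c j y - z j}"
definition Cl :: "nat \<Rightarrow> (nat \<Rightarrow> real) \<Rightarrow> 'a set" where
  "Cl i z = {y. \<forall>j\<in>{1..N}. j \<noteq> i \<longrightarrow> c i y - z i \<le> c j y - z j}"

lemma g_def2: "g z = (\<Sum>i\<in>{1..N}. z i * p i) + (\<integral>y. phi z y \<partial>Q)"
  unfolding g_def g_dual_def phi_def c_def by simp

sublocale Q: prob_space Q by (rule Q_prob)

lemma space_Q[simp]: "space Q = UNIV"
  using Q_borel sets_eq_imp_space_eq by fastforce

lemma sets_Q_borel[measurable_cong]: "sets Q = sets borel" by (rule Q_borel)

lemma c_cont: "continuous_on UNIV (c i)"
  unfolding c_def[abs_def]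
  by (intro continuous_on_compose2[OF h_cont]) (auto intro!: continuous_intros)

lemma c_meas[measurable]: "c i \<in> borel_measurable Q"
  using borel_measurable_continuous_onI[OF c_cont]
  by (simp add: measurable_cong_sets[OF Q_borel refl])

lemma c_int: "i \<in> {1..N} \<Longrightarrow> integrable Q (c i)"
  using integr unfolding c_def[abs_def] by auto

lemma c_nonneg: "c i y \<ge> 0" using h_nonneg c_def by simp

lemma fin_ne: "finite {1..N}" "{1..N} \<noteq> {}" using N by auto

lemma phi_le: "i \<in> {1..N} \<Longrightarrow> phi z y \<le> c i y - z i"
  unfolding phi_def by (rule Min_le) auto

lemma phi_ge: "(\<And>i. i \<in> {1..N} \<Longrightarrow> v \<le> c i y - z i) \<Longrightarrow> v \<le> phi z y"
  unfolding phi_def using fin_ne by (subst Min_ge_iff) auto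

lemma phi_attained: "\<exists>i\<in>{1..N}. phi z y = c i y - z i"
proof -
  have "phi z y \<in> (\<lambda>i. c i y - z i) ` {1..N}" unfolding phi_def using fin_ne by (intro Min_in) auto
  then show ?thesis by auto
qed

lemma phi_meas[measurable]: "phi z \<in> borel_measurable Q"
  unfolding phi_def[abs_def] using fin_ne by measurable

lemma phi_int: "integrable Q (phi z)"
proof -
  have b: "integrable Q (\<lambda>y. (\<Sum>i\<in>{1..N}. c i y) + (\<Sum>i\<in>{1..N}. \<bar>z i\<bar>))"
    using c_int by (intro Bochner_Integration.integrable_add integrable_sum) auto
  show ?thesis
  proof (rule Bochner_Integration.integrable_bound[OF b])
    show "AE y in Q. norm (phi z y) \<le> norm ((\<Sum>i\<in>{1..N}. c i y) + (\<Sum>i\<in>{1..N}. \<bar>z i\<bar>))"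
    proof (intro AE_I2)
      fix y
      obtain i where i: "i \<in> {1..N}" "phi z y = c i y - z i" using phi_attained by blast
      have s1: "c i y \<le> (\<Sum>i\<in>{1..N}. c i y)" using i c_nonneg fin_ne
        by (intro member_le_sum) auto
      have s2: "\<bar>z i\<bar> \<le> (\<Sum>i\<in>{1..N}. \<bar>z i\<bar>)" using i fin_ne
        by (intro member_le_sum) auto
      have s0: "0 \<le> (\<Sum>i\<in>{1..N}. c i y)" using c_nonneg by (simp add: sum_nonneg)
      show "norm (phi z y) \<le> norm ((\<Sum>i\<in>{1..N}. c i y) + (\<Sum>i\<in>{1..N}. \<bar>z i\<bar>))"
        using i s1 s2 s0 c_nonneg[of i y] by (auto simp: sum_nonneg)
    qed
  qed measurable
qed

end

context otset begin

lemma line_sc: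
  fixes w u :: 'a
  assumes u: "u \<noteq> 0" and ab: "a < b" and l: "0 < l" "l < 1"
  shows "h (w - ((1 - l) * a + l * b) *\<^sub>R u) < (1 - l) * h (w - a *\<^sub>R u) + l * h (w - b *\<^sub>R u)"
proof -
  have ne: "w - a *\<^sub>R u \<noteq> w - b *\<^sub>R u" using u ab by auto
  have "h ((1 - l) *\<^sub>R (w - a *\<^sub>R u) + l *\<^sub>R (w - b *\<^sub>R u)) < (1 - l) * h (w - a *\<^sub>R u) + l * h (w - b *\<^sub>R u)"
    using A1 ne l unfolding strictly_convex_on_def by blast
  moreover have "(1 - l) *\<^sub>R (w - a *\<^sub>R u) + l *\<^sub>R (w - b *\<^sub>R u) = w - ((1 - l) * a + l * b) *\<^sub>R u"
    by (simp add: algebra_simps)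
  ultimately show ?thesis by simp
qed

lemma line_incr:
  fixes w u :: 'a
  assumes u: "u \<noteq> 0" and s: "s > 0"
  shows "h (w - 1 *\<^sub>R u) + h (w - s *\<^sub>R u) < h (w - 0 *\<^sub>R u) + h (w - (s + 1) *\<^sub>R u)"
proof -
  let ?H = "\<lambda>t. h (w - t *\<^sub>R u)"
  define a where "a = 1 / (s + 1)"
  define b where "b = s / (s + 1)"
  have s1: "s + 1 > 0" using s by simp
  have ab: "a + b = 1" unfolding a_def b_def using s1 by (simp add: add_divide_distrib[symmetric])
  have a0: "0 < a" "a < 1" unfolding a_def using s by (auto simp: divide_simps)
  have b0: "0 < b" "b < 1" unfolding b_def using s by (auto simp: divide_simps)
  have e1: "(1 - a) * 0 + a * (s+1) = 1" unfolding a_def using s1 by simp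
  have e2: "(1 - b) * 0 + b * (s+1) = s" unfolding b_def using s1 by simp
  have 1: "?H ((1 - a) * 0 + a * (s+1)) < (1 - a) * ?H 0 + a * ?H (s+1)"
    using s a0 by (intro line_sc u) auto
  have 2: "?H ((1 - b) * 0 + b * (s+1)) < (1 - b) * ?H 0 + b * ?H (s+1)"
    using s b0 by (intro line_sc u) auto
  have "?H 1 + ?H s < ((1 - a) * ?H 0 + a * ?H (s+1)) + ((1 - b) * ?H 0 + b * ?H (s+1))"
    using 1 2 unfolding e1 e2 by linarith
  also have "\<dots> = (2 - (a + b)) * ?H 0 + (a + b) * ?H (s+1)" by (simp add: algebra_simps)
  also have "\<dots> = ?H 0 + ?H (s+1)" unfolding ab by simp
  finally show ?thesis by simp
qed

lemma diff_dec:
  assumes ij: "i \<in> {1..N}" "j \<in> {1..N}" "i \<noteq> j" and s: "s > 0"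
  shows "c i (y + s *\<^sub>R (x i - x j)) - c j (y + s *\<^sub>R (x i - x j)) < c i y - c j y"
proof -
  define u where "u = x i - x j"
  have "x i \<noteq> x j" using distinct ij by (meson inj_onD)
  then have u: "u \<noteq> 0" unfolding u_def by simp
  define w where "w = x i - y"
  have L: "h (w - 1 *\<^sub>R u) + h (w - s *\<^sub>R u) < h (w - 0 *\<^sub>R u) + h (w - (s + 1) *\<^sub>R u)"
    by (rule line_incr[OF u s])
  have e1: "w - 1 *\<^sub>R u = x j - y" unfolding w_def u_def by simp
  have e2: "w - s *\<^sub>R u = x i - (y + s *\<^sub>R u)" unfolding w_def by (simp add: algebra_simps)
  have e3: "w - (s + 1) *\<^sub>R u = x j - (y + s *\<^sub>R u)" unfolding w_def u_def by (simp add: algebra_simps)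
  have e0: "w - 0 *\<^sub>R u = x i - y" unfolding w_def by simp
  have "h (x j - y) + h (x i - (y + s *\<^sub>R u)) < h (x i - y) + h (x j - (y + s *\<^sub>R u))"
    using L unfolding e0 e1 e2 e3 .
  then show ?thesis unfolding c_def u_def[symmetric] by simp
qed

lemma tie_null_lborel:
  assumes ij: "i \<in> {1..N}" "j \<in> {1..N}" "i \<noteq> j"
  shows "{y. c i y - c j y = t} \<in> null_sets lborel"
proof (rule level_null)
  show "continuous_on UNIV (\<lambda>y. c i y - c j y)" using c_cont by (intro continuous_intros) auto
  have "x i \<noteq> x j" using distinct ij by (meson inj_onD)
  then show "x i - x j \<noteq> 0" by simp
qed (rule diff_dec[OF ij])

lemma ties_null: "ties z \<in> null_sets Q"
proof -
  have "ties z = (\<Union>i\<in>{1..N}. \<Union>j\<in>{1..N} - {i}. {y. c i y - c j y = z i - z j})"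
  proof -
    have eq: "\<And>i j y. (c i y - c j y = z i - z j) = (c i y - z i = c j y - z j)" by linarith
    show ?thesis
    proof (rule set_eqI)
      fix y
      show "y \<in> ties z \<longleftrightarrow> y \<in> (\<Union>i\<in>{1..N}. \<Union>j\<in>{1..N} - {i}. {y. c i y - c j y = z i - z j})"
      proof
        assume "y \<in> ties z"
        then obtain i j where "i\<in>{1..N}" "j\<in>{1..N}" "i\<noteq>j" "c i y - z i = c j y - z j"
          unfolding ties_def by blast
        then show "y \<in> (\<Union>i\<in>{1..N}. \<Union>j\<in>{1..N} - {i}. {y. c i y - c j y = z i - z j})"
          by (intro UN_I[of i] UN_I[of j]) (auto simp: eq)
      next
        assume "y \<in> (\<Union>i\<in>{1..N}. \<Union>j\<in>{1..N} - {i}. {y. c i y - c j y = z i - z j})"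
        then obtain i j where "i\<in>{1..N}" "j\<in>{1..N} - {i}" "c i y - c j y = z i - z j"
          by blast
        then have "i\<in>{1..N}" "j\<in>{1..N}" "i \<noteq> j" "c i y - z i = c j y - z j" by (auto simp: eq)
        then show "y \<in> ties z" unfolding ties_def by blast
      qed
    qed
  qed
  also have "\<dots> \<in> null_sets Q"
  proof (intro null_sets.finite_UN ballI)
    fix i j assume "i \<in> {1..N}" "j \<in> {1..N} - {i}"
    then have "{y. c i y - c j y = z i - z j} \<in> null_sets lborel"
      by (intro tie_null_lborel) auto
    then show "{y. c i y - c j y = z i - z j} \<in> null_sets Q"
      using Q_ac unfolding absolutely_continuous_def by auto
  qed auto
  finally show ?thesis .
qed

lemma AE_not_tie: "AE y in Q. y \<notin> ties z"
  using ties_null[of z] by (rule AE_not_in)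

end

context otset begin

lemma pred_sets: "Measurable.pred Q P \<Longrightarrow> {y. P y} \<in> sets Q"
  unfolding pred_def by simp

lemma S_sets[measurable]: "S i z \<in> sets Q"
  unfolding S_def by (rule pred_sets) measurable

lemma Cl_sets[measurable]: "Cl i z \<in> sets Q"
  unfolding Cl_def by (rule pred_sets) measurable

lemma ties_sets[measurable]: "ties z \<in> sets Q"
  using ties_null[of z] by auto

lemma sum_upd: "i \<in> {1..N} \<Longrightarrow> (\<Sum>k\<in>{1..N}. (z(i := z i + e)) k * p k) = (\<Sum>k\<in>{1..N}. z k * p k) + e * p i"
proof -
  assume i: "i \<in> {1..N}"
  have "(\<Sum>k\<in>{1..N}. (z(i := z i + e)) k * p k) = (\<Sum>k\<in>{1..N}. z k * p k + (if k = i then e * p i else 0))"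
    by (intro sum.cong) (auto simp: algebra_simps)
  also have "\<dots> = (\<Sum>k\<in>{1..N}. z k * p k) + e * p i"
    using i by (simp add: sum.distrib)
  finally show ?thesis .
qed

lemma g_upd: "i \<in> {1..N} \<Longrightarrow> g (z(i := z i + e)) - g z = e * p i + (\<integral>y. phi (z(i := z i + e)) y - phi z y \<partial>Q)"
  unfolding g_def2 using sum_upd[of i z e] phi_int
  by (simp add: Bochner_Integration.integral_diff)

lemma e_seq:
  fixes e :: "nat \<Rightarrow> real"
  assumes d: "d > 0" and e_def: "e = (\<lambda>n::nat. d / 2 * inverse (real (Suc n)))"
  shows "\<And>n. 0 < e n" "\<And>n. e n < d" "\<And>n. e (Suc n) < e n" "e \<longlonglongrightarrow> 0"
proof -
  show "0 < e n" for n unfolding e_def using d by simp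
  show "e n < d" for n
  proof -
    have "inverse (real (Suc n)) \<le> 1" by (simp add: field_simps)
    then have "d / 2 * inverse (real (Suc n)) \<le> d / 2" using d by (simp add: mult_left_le)
    then show ?thesis unfolding e_def using d by simp
  qed
  show "e (Suc n) < e n" for n unfolding e_def using d by (simp add: field_simps)
  show "e \<longlonglongrightarrow> 0" unfolding e_def
    using tendsto_mult[OF tendsto_const LIMSEQ_inverse_real_of_nat, of "d/2"] by simp
qed

lemma incr_cond:
  assumes i: "i \<in> {1..N}" and d: "d > 0"
    and opt: "\<And>e. 0 < e \<Longrightarrow> e < d \<Longrightarrow> g (z(i := z i + e)) \<le> g z"
  shows "measure Q (Cl i z) \<ge> p i"
proof -
  define A where "A e = {y. \<forall>j\<in>{1..N}. j \<noteq> i \<longrightarrow> c i y - z i - e < c j y - z j}" for e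
  have A_sets[measurable]: "A e \<in> sets Q" for e unfolding A_def by (rule pred_sets) measurable
  have QA: "measure Q (A e) \<ge> p i" if e: "0 < e" "e < d" for e
  proof -
    let ?z' = "z(i := z i + e)"
    have pw: "phi ?z' y - phi z y \<ge> - e * indicator (A e) y" for y
    proof (cases "y \<in> A e")
      case True
      have "phi z y - e \<le> phi ?z' y"
      proof (rule phi_ge)
        fix k assume k: "k \<in> {1..N}"
        have "phi z y \<le> c k y - z k" using phi_le[OF k] .
        moreover have "?z' k \<le> z k + e" using e by auto
        ultimately show "phi z y - e \<le> c k y - ?z' k" by linarith
      qed
      then show ?thesis using True by simp
    next
      case False
      then obtain j where j: "j \<in> {1..N}" "j \<noteq> i" "c j y - z j \<le> c i y - z i - e"
        unfolding A_def by (auto simp: not_less)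
      have "phi z y \<le> phi ?z' y"
      proof (rule phi_ge)
        fix k assume k: "k \<in> {1..N}"
        show "phi z y \<le> c k y - ?z' k"
        proof (cases "k = i")
          case True
          then show ?thesis using phi_le[OF j(1), of z y] j by simp
        next
          case False
          then show ?thesis using phi_le[OF k, of z y] by simp
        qed
      qed
      then show ?thesis using False by simp
    qed
    have "(\<integral>y. - e * indicator (A e) y \<partial>Q) \<le> (\<integral>y. phi ?z' y - phi z y \<partial>Q)"
      using pw phi_int by (intro integral_mono integrable_mult_right integrable_real_indicator) (auto simp: less_top[symmetric])
    then have "- e * measure Q (A e) \<le> (\<integral>y. phi ?z' y - phi z y \<partial>Q)" by simp
    then have "e * p i - e * measure Q (A e) \<le> g ?z' - g z" using g_upd[OF i, of z e] by simp
    also have "\<dots> \<le> 0" using opt[OF e] by simp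
    finally have "e * (p i - measure Q (A e)) \<le> 0" by (simp add: algebra_simps)
    then show ?thesis using e by (simp add: mult_le_0_iff)
  qed
  define e where "e = (\<lambda>n::nat. d / 2 * inverse (real (Suc n)))"
  note es = e_seq[OF d e_def]
  have dec: "decseq (\<lambda>n. A (e n))"
  proof (rule decseq_SucI)
    fix n show "A (e (Suc n)) \<subseteq> A (e n)"
    proof (unfold A_def, intro subsetI CollectI ballI impI)
      fix y j assume y: "y \<in> {y. \<forall>j\<in>{1..N}. j \<noteq> i \<longrightarrow> c i y - z i - e (Suc n) < c j y - z j}"
        and j: "j \<in> {1..N}" "j \<noteq> i"
      then have "c i y - z i - e (Suc n) < c j y - z j" by blast
      then show "c i y - z i - e n < c j y - z j" using es(3)[of n] by linarith
    qed
  qed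
  have inter: "(\<Inter>n. A (e n)) = Cl i z"
  proof
    show "Cl i z \<subseteq> (\<Inter>n. A (e n))"
    proof (unfold A_def, intro subsetI INT_I CollectI ballI impI)
      fix y n j assume y: "y \<in> Cl i z" and j: "j \<in> {1..N}" "j \<noteq> i"
      then have "c i y - z i \<le> c j y - z j" unfolding Cl_def by blast
      then show "c i y - z i - e n < c j y - z j" using es(1)[of n] by linarith
    qed
    show "(\<Inter>n. A (e n)) \<subseteq> Cl i z"
    proof
      fix y assume y: "y \<in> (\<Inter>n. A (e n))"
      show "y \<in> Cl i z" unfolding Cl_def
      proof (intro CollectI ballI impI)
        fix j assume j: "j \<in> {1..N}" "j \<noteq> i"
        have lim: "(\<lambda>n. c i y - z i - e n) \<longlonglongrightarrow> c i y - z i - 0"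
          by (intro tendsto_intros es(4))
        have "\<forall>n. c i y - z i - e n \<le> c j y - z j"
          using y j unfolding A_def by (auto intro: less_imp_le)
        then show "c i y - z i \<le> c j y - z j"
          using LIMSEQ_le_const2[OF lim] by auto
      qed
    qed
  qed
  have "(\<lambda>n. measure Q (A (e n))) \<longlonglongrightarrow> measure Q (\<Inter>n. A (e n))"
    using dec by (intro Q.finite_Lim_measure_decseq) auto
  then have lim: "(\<lambda>n. measure Q (A (e n))) \<longlonglongrightarrow> measure Q (Cl i z)" unfolding inter .
  show ?thesis
    using QA es(1,2) by (intro LIMSEQ_le_const[OF lim]) auto
qed

lemma decr_cond:
  assumes i: "i \<in> {1..N}" and d: "d > 0"
    and opt: "\<And>e. 0 < e \<Longrightarrow> e < d \<Longrightarrow> g (z(i := z i - e)) \<le> g z"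
  shows "measure Q (S i z) \<le> p i"
proof -
  define B where "B e = {y. \<forall>j\<in>{1..N}. j \<noteq> i \<longrightarrow> c i y - z i + e \<le> c j y - z j}" for e
  have B_sets[measurable]: "B e \<in> sets Q" for e unfolding B_def by (rule pred_sets) measurable
  have QB: "measure Q (B e) \<le> p i" if e: "0 < e" "e < d" for e
  proof -
    let ?z' = "z(i := z i - e)"
    have gu: "g ?z' - g z = - e * p i + (\<integral>y. phi ?z' y - phi z y \<partial>Q)"
      using g_upd[OF i, of z "- e"] by simp
    have pw: "phi ?z' y - phi z y \<ge> e * indicator (B e) y" for y
    proof -
      have ge: "phi z y \<le> phi ?z' y"
      proof (rule phi_ge)
        fix k assume k: "k \<in> {1..N}"
        have "phi z y \<le> c k y - z k" using phi_le[OF k] .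
        moreover have "?z' k \<le> z k" using e by auto
        ultimately show "phi z y \<le> c k y - ?z' k" by linarith
      qed
      show ?thesis
      proof (cases "y \<in> B e")
        case True
        have "phi z y + e \<le> phi ?z' y"
        proof (rule phi_ge)
          fix k assume k: "k \<in> {1..N}"
          show "phi z y + e \<le> c k y - ?z' k"
          proof (cases "k = i")
            case True
            then show ?thesis using phi_le[OF i, of z y] by simp
          next
            case False
            then have "c i y - z i + e \<le> c k y - z k" using \<open>y \<in> B e\<close> k unfolding B_def by auto
            then show ?thesis using phi_le[OF i, of z y] False by simp
          qed
        qed
        then show ?thesis using True by simp
      next
        case False
        then show ?thesis using ge by simp
      qed
    qed
    have "(\<integral>y. e * indicator (B e) y \<partial>Q) \<le> (\<integral>y. phi ?z' y - phi z y \<partial>Q)"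
      using pw phi_int by (intro integral_mono integrable_mult_right integrable_real_indicator) (auto simp: less_top[symmetric])
    then have "e * measure Q (B e) \<le> (\<integral>y. phi ?z' y - phi z y \<partial>Q)" by simp
    then have "- e * p i + e * measure Q (B e) \<le> g ?z' - g z" using gu by simp
    also have "\<dots> \<le> 0" using opt[OF e] by simp
    finally have "e * (measure Q (B e) - p i) \<le> 0" by (simp add: algebra_simps)
    then show ?thesis using e by (simp add: mult_le_0_iff)
  qed
  define e where "e = (\<lambda>n::nat. d / 2 * inverse (real (Suc n)))"
  note es = e_seq[OF d e_def]
  have inc: "incseq (\<lambda>n. B (e n))"
  proof (rule incseq_SucI)
    fix n show "B (e n) \<subseteq> B (e (Suc n))"
    proof (unfold B_def, intro subsetI CollectI ballI impI)
      fix y j assume y: "y \<in> {y. \<forall>j\<in>{1..N}. j \<noteq> i \<longrightarrow> c i y - z i + e n \<le> c j y - z j}"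
        and j: "j \<in> {1..N}" "j \<noteq> i"
      then have "c i y - z i + e n \<le> c j y - z j" by blast
      then show "c i y - z i + e (Suc n) \<le> c j y - z j" using es(3)[of n] by linarith
    qed
  qed
  have un: "(\<Union>n. B (e n)) = S i z"
  proof
    show "(\<Union>n. B (e n)) \<subseteq> S i z"
    proof (intro subsetI)
      fix y assume "y \<in> (\<Union>n. B (e n))"
      then obtain n where y: "y \<in> B (e n)" by blast
      show "y \<in> S i z" unfolding S_def
      proof (intro CollectI ballI impI)
        fix j assume j: "j \<in> {1..N}" "j \<noteq> i"
        then have "c i y - z i + e n \<le> c j y - z j" using y unfolding B_def by blast
        then show "c i y - z i < c j y - z j" using es(1)[of n] by linarith
      qed
    qed
    show "S i z \<subseteq> (\<Union>n. B (e n))"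
    proof
      fix y assume y: "y \<in> S i z"
      have ev: "\<forall>\<^sub>F n in sequentially. \<forall>j\<in>{1..N}. j \<noteq> i \<longrightarrow> c i y - z i + e n \<le> c j y - z j"
      proof (rule eventually_ball_finite)
        show "finite {1..N}" by simp
        show "\<forall>j\<in>{1..N}. \<forall>\<^sub>F n in sequentially. j \<noteq> i \<longrightarrow> c i y - z i + e n \<le> c j y - z j"
        proof
          fix j assume j: "j \<in> {1..N}"
          show "\<forall>\<^sub>F n in sequentially. j \<noteq> i \<longrightarrow> c i y - z i + e n \<le> c j y - z j"
          proof (cases "j = i")
            case True then show ?thesis by simp
          next
            case False
            then have gap: "0 < (c j y - z j) - (c i y - z i)" using y j unfolding S_def by auto
            have "\<forall>\<^sub>F n in sequentially. e n < (c j y - z j) - (c i y - z i)"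
              using order_tendstoD(2)[OF es(4) gap] .
            then show ?thesis by eventually_elim auto
          qed
        qed
      qed
      then obtain M where "\<forall>n\<ge>M. \<forall>j\<in>{1..N}. j \<noteq> i \<longrightarrow> c i y - z i + e n \<le> c j y - z j"
        unfolding eventually_sequentially by blast
      then have "\<forall>j\<in>{1..N}. j \<noteq> i \<longrightarrow> c i y - z i + e M \<le> c j y - z j" by blast
      then show "y \<in> (\<Union>n. B (e n))" unfolding B_def by blast
    qed
  qed
  have "(\<lambda>n. measure Q (B (e n))) \<longlonglongrightarrow> measure Q (\<Union>n. B (e n))"
    using inc by (intro Q.finite_Lim_measure_incseq) auto
  then have lim: "(\<lambda>n. measure Q (B (e n))) \<longlonglongrightarrow> measure Q (S i z)" unfolding un .
  show ?thesis
    using QB es(1,2) by (intro LIMSEQ_le_const2[OF lim]) auto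
qed

lemma Cl_sub: "i \<in> {1..N} \<Longrightarrow> Cl i z \<subseteq> S i z \<union> ties z"
proof
  fix y assume i: "i \<in> {1..N}" and y: "y \<in> Cl i z"
  show "y \<in> S i z \<union> ties z"
  proof (cases "y \<in> S i z")
    case False
    then obtain j where j: "j \<in> {1..N}" "j \<noteq> i" "c j y - z j \<le> c i y - z i"
      unfolding S_def by (auto simp: not_less)
    have "c i y - z i \<le> c j y - z j" using y j(1,2) unfolding Cl_def by blast
    then have eq: "c i y - z i = c j y - z j" using j(3) by linarith
    have "\<exists>i'\<in>{1..N}. \<exists>j'\<in>{1..N}. i' \<noteq> j' \<and> c i' y - z i' = c j' y - z j'"
      using i j(1,2) eq by metis
    then have "y \<in> ties z" unfolding ties_def by simp
    then show ?thesis by simp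
  qed simp
qed

lemma S_Cl: "S i z \<subseteq> Cl i z"
proof
  fix y assume "y \<in> S i z"
  then have "\<forall>j\<in>{1..N}. j \<noteq> i \<longrightarrow> c i y - z i < c j y - z j" unfolding S_def by simp
  then have "\<forall>j\<in>{1..N}. j \<noteq> i \<longrightarrow> c i y - z i \<le> c j y - z j" by (meson less_imp_le)
  then show "y \<in> Cl i z" unfolding Cl_def by simp
qed

lemma S_disj: "disjoint_family_on (\<lambda>i. S i z) {1..N}"
proof (unfold disjoint_family_on_def, intro ballI impI equalityI subsetI)
  fix m n y assume m: "m \<in> {1..N}" and n: "n \<in> {1..N}" and mn: "m \<noteq> n" and y: "y \<in> S m z \<inter> S n z"
  then have "c m y - z m < c n y - z n" "c n y - z n < c m y - z m" unfolding S_def by auto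
  then show "y \<in> {}" by simp
qed simp

lemma S_cover: "y \<notin> ties z \<Longrightarrow> \<exists>i\<in>{1..N}. y \<in> S i z"
proof -
  assume nt: "y \<notin> ties z"
  obtain i where i: "i \<in> {1..N}" "phi z y = c i y - z i" using phi_attained by blast
  have "y \<in> S i z" unfolding S_def
  proof (intro CollectI ballI impI)
    fix j assume j: "j \<in> {1..N}" "j \<noteq> i"
    have "c i y - z i \<le> c j y - z j" using phi_le[OF j(1), of z y] i by simp
    moreover have "c i y - z i \<noteq> c j y - z j"
    proof
      assume eq: "c i y - z i = c j y - z j"
      have "\<exists>i'\<in>{1..N}. \<exists>j'\<in>{1..N}. i' \<noteq> j' \<and> c i' y - z i' = c j' y - z j'"
        using i(1) j eq by metis
      then have "y \<in> ties z" unfolding ties_def by simp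
      then show False using nt by simp
    qed
    ultimately show "c i y - z i < c j y - z j" by simp
  qed
  then show ?thesis using i by blast
qed

lemma measure_Cl_S: "i \<in> {1..N} \<Longrightarrow> measure Q (Cl i z) = measure Q (S i z)"
proof -
  assume i: "i \<in> {1..N}"
  have "AE y in Q. y \<in> Cl i z \<longleftrightarrow> y \<in> S i z"
    using AE_not_tie[of z] by eventually_elim (use Cl_sub[OF i] S_Cl in blast)
  then have "emeasure Q (Cl i z) = emeasure Q (S i z)" by (intro emeasure_eq_AE) auto
  then show ?thesis by (simp add: measure_def)
qed

lemma union_S_AE: "AE y in Q. y \<in> (\<Union>i\<in>{1..N}. S i z)"
proof -
  have imp: "\<And>y. y \<notin> ties z \<Longrightarrow> y \<in> (\<Union>i\<in>{1..N}. S i z)"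
    using S_cover by blast
  show ?thesis using AE_not_tie[of z] imp by (rule eventually_mono)
qed

lemma sum_S: "(\<Sum>i\<in>{1..N}. measure Q (S i z)) = 1"
proof -
  have "(\<Sum>i\<in>{1..N}. measure Q (S i z)) = measure Q (\<Union>i\<in>{1..N}. S i z)"
    using S_disj by (intro measure_finite_Union[symmetric]) auto
  also have "\<dots> = 1" using union_S_AE[of z]
    by (subst Q.AE_in_set_eq_1[symmetric]) auto
  finally show ?thesis .
qed

lemma global_opt_S:
  assumes opt: "\<And>w. g w \<le> g z" and i: "i \<in> {1..N}"
  shows "measure Q (S i z) = p i"
proof -
  have "measure Q (Cl i z) \<ge> p i" by (rule incr_cond[OF i zero_less_one]) (rule opt)
  moreover have "measure Q (S i z) \<le> p i" by (rule decr_cond[OF i zero_less_one]) (rule opt)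
  ultimately show ?thesis using measure_Cl_S[OF i, of z] by linarith
qed

end

lemma discrete_emeasure:
  fixes x :: "nat \<Rightarrow> 'a::euclidean_space"
  assumes A: "A \<in> sets borel"
  shows "emeasure (discrete_measure N x p) A = (\<Sum>k\<in>{1..N}. if x k \<in> A then ennreal (p k) else 0)"
proof -
  let ?mu = "\<lambda>A. \<Sum>k\<in>{1..N}. if x k \<in> A then ennreal (p k) else 0"
  have mu_ind: "?mu B = (\<Sum>k\<in>{1..N}. ennreal (p k) * indicator B (x k))" for B
    by (intro sum.cong) (auto simp: indicator_def)
  have sa: "sigma_algebra UNIV (sets (borel :: 'a measure))"
    using sets.sigma_algebra_axioms[of "borel :: 'a measure"] by simp
  have pos: "positive (sets borel) ?mu" unfolding positive_def by simp
  have ca: "countably_additive (sets borel) ?mu"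
  proof (rule countably_additiveI)
    fix F :: "nat \<Rightarrow> 'a set" assume F: "range F \<subseteq> sets borel" "disjoint_family F" "\<Union> (range F) \<in> sets borel"
    have "(\<Sum>n. ?mu (F n)) = (\<Sum>n. \<Sum>k\<in>{1..N}. ennreal (p k) * indicator (F n) (x k))"
      by (simp only: mu_ind)
    also have "\<dots> = (\<Sum>k\<in>{1..N}. \<Sum>n. ennreal (p k) * indicator (F n) (x k))"
      by (rule suminf_sum) simp
    also have "\<dots> = (\<Sum>k\<in>{1..N}. ennreal (p k) * indicator (\<Union>n. F n) (x k))"
      using suminf_indicator[OF F(2)] by simp
    also have "\<dots> = ?mu (\<Union> (range F))" by (simp only: mu_ind)
    finally show "(\<Sum>n. ?mu (F n)) = ?mu (\<Union> (range F))" .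
  qed
  show ?thesis unfolding discrete_measure_def
    using emeasure_measure_of_sigma[OF sa pos ca A] .
qed

context otset begin

abbreviation "P \<equiv> discrete_measure N x p"

lemma P_point: "k \<in> {1..N} \<Longrightarrow> emeasure P {x k} = ennreal (p k)"
proof -
  assume k: "k \<in> {1..N}"
  have "emeasure P {x k} = (\<Sum>j\<in>{1..N}. if x j \<in> {x k} then ennreal (p j) else 0)"
    by (rule discrete_emeasure) simp
  also have "\<dots> = (\<Sum>j\<in>{1..N}. if j = k then ennreal (p j) else 0)"
  proof (intro sum.cong refl)
    fix j assume j: "j \<in> {1..N}"
    have "x j = x k \<longleftrightarrow> j = k" using distinct j k by (meson inj_onD)
    then show "(if x j \<in> {x k} then ennreal (p j) else 0) = (if j = k then ennreal (p j) else 0)" by simp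
  qed
  also have "\<dots> = ennreal (p k)" using k by simp
  finally show ?thesis .
qed

lemma P_outside: "emeasure P (UNIV - x ` {1..N}) = 0"
proof -
  have "closed (x ` {1..N})" by (intro finite_imp_closed) auto
  then have "UNIV - x ` {1..N} \<in> sets borel" by (intro borel_open) (simp add: open_Diff)
  then have "emeasure P (UNIV - x ` {1..N}) = (\<Sum>j\<in>{1..N}. if x j \<in> UNIV - x ` {1..N} then ennreal (p j) else 0)"
    by (rule discrete_emeasure)
  also have "\<dots> = 0" by (intro sum.neutral) auto
  finally show ?thesis .
qed

lemma cost_meas: "(\<lambda>xy. h (fst xy - snd xy)) \<in> borel_measurable (borel :: ('a \<times> 'a) measure)"
proof (rule borel_measurable_continuous_onI)
  show "continuous_on UNIV (\<lambda>xy::'a\<times>'a. h (fst xy - snd xy))"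
    by (intro continuous_on_compose2[OF h_cont]) (auto intro!: continuous_intros)
qed

lemma weak_duality:
  assumes pi: "\<pi> \<in> couplings P Q"
  shows "ennreal (g z) \<le> (\<integral>\<^sup>+ xy. ennreal (h (fst xy - snd xy)) \<partial>\<pi>)"
proof -
  have spi: "sets \<pi> = sets borel" and pps: "prob_space \<pi>"
    and marg: "\<And>A. A \<in> sets borel \<Longrightarrow> emeasure \<pi> (A \<times> UNIV) = emeasure P A \<and> emeasure \<pi> (UNIV \<times> A) = emeasure Q A"
    using pi unfolding couplings_def by auto
  interpret pi: prob_space \<pi> by (rule pps)
  have space_pi: "space \<pi> = UNIV" using spi sets_eq_imp_space_eq by fastforce
  let ?C = "\<lambda>xy::'a\<times>'a. h (fst xy - snd xy)"
  have C_meas: "?C \<in> borel_measurable \<pi>"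
    using cost_meas by (simp add: measurable_cong_sets[OF spi refl])
  show ?thesis
  proof (cases "(\<integral>\<^sup>+ xy. ennreal (?C xy) \<partial>\<pi>) = \<infinity>")
    case True then show ?thesis by simp
  next
    case False
    have intC: "integrable \<pi> ?C"
      using False C_meas h_nonneg by (intro integrableI_nonneg) (auto simp: less_top)
    have eqC: "(\<integral>\<^sup>+ xy. ennreal (?C xy) \<partial>\<pi>) = ennreal (\<integral>xy. ?C xy \<partial>\<pi>)"
      using intC h_nonneg by (intro nn_integral_eq_integral) auto
    have snd_meas: "snd \<in> \<pi> \<rightarrow>\<^sub>M (borel :: 'a measure)"
      using borel_measurable_continuous_onI[OF continuous_on_snd[OF continuous_on_id]]
      by (simp add: measurable_cong_sets[OF spi refl])
    have distr_snd: "distr \<pi> borel snd = Q"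
    proof (rule measure_eqI)
      show "sets (distr \<pi> borel snd) = sets Q" using Q_borel by simp
      fix A assume "A \<in> sets (distr \<pi> borel snd)"
      then have A: "A \<in> sets borel" by simp
      have "snd -` A \<inter> space \<pi> = UNIV \<times> A" using space_pi by auto
      then show "emeasure (distr \<pi> borel snd) A = emeasure Q A"
        using marg[OF A] A snd_meas by (simp add: emeasure_distr)
    qed
    have phi_borel: "phi z \<in> borel_measurable borel"
      using phi_meas[of z] by (simp add: measurable_cong_sets[OF Q_borel refl])
    have int_phi_snd: "integrable \<pi> (\<lambda>xy. phi z (snd xy))"
      using phi_int[of z] integrable_distr_eq[OF snd_meas phi_borel] distr_snd by simp
    have integral_phi_snd: "(\<integral>xy. phi z (snd xy) \<partial>\<pi>) = (\<integral>y. phi z y \<partial>Q)"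
      using integral_distr[OF snd_meas phi_borel] distr_snd by simp
    let ?psi = "\<lambda>xy::'a\<times>'a. \<Sum>k\<in>{1..N}. z k * indicator ({x k} \<times> UNIV) xy"
    have pt_sets: "{x k} \<times> UNIV \<in> sets \<pi>" for k
      using spi by (simp add: closed_Times borel_closed)
    have pt_meas: "measure \<pi> ({x k} \<times> UNIV) = p k" if k: "k \<in> {1..N}" for k
    proof -
      have "emeasure \<pi> ({x k} \<times> UNIV) = ennreal (p k)"
        using marg[of "{x k}"] P_point[OF k] by simp
      then show ?thesis using p_pos k by (simp add: measure_def)
    qed
    have int_k: "integrable \<pi> (\<lambda>xy. z k * indicator ({x k} \<times> UNIV) xy)" for k
      using pt_sets[of k] by (intro integrable_mult_right integrable_real_indicator) (auto simp: less_top[symmetric])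
    have int_psi: "integrable \<pi> ?psi"
      using int_k by (rule Bochner_Integration.integrable_sum[where f="\<lambda>k xy. z k * indicator ({x k} \<times> UNIV) xy"])
    have integral_psi: "(\<integral>xy. ?psi xy \<partial>\<pi>) = (\<Sum>k\<in>{1..N}. z k * p k)"
    proof -
      have "(\<integral>xy. ?psi xy \<partial>\<pi>) = (\<Sum>k\<in>{1..N}. \<integral>xy. z k * indicator ({x k} \<times> UNIV) xy \<partial>\<pi>)"
        using int_k by (rule Bochner_Integration.integral_sum[where f="\<lambda>k xy. z k * indicator ({x k} \<times> UNIV) xy"])
      also have "\<dots> = (\<Sum>k\<in>{1..N}. z k * measure \<pi> ({x k} \<times> UNIV))"
        using pt_sets by (intro sum.cong refl) (simp add: less_top[symmetric])
      also have "\<dots> = (\<Sum>k\<in>{1..N}. z k * p k)"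
        using pt_meas by (intro sum.cong refl) simp
      finally show ?thesis .
    qed
    have AE_fst: "AE xy in \<pi>. fst xy \<in> x ` {1..N}"
    proof -
      have "closed (x ` {1..N})" by (intro finite_imp_closed) auto
      then have os: "UNIV - x ` {1..N} \<in> sets borel" by (intro borel_open) (simp add: open_Diff)
      have "open (UNIV - x ` {1..N})" using \<open>closed (x ` {1..N})\<close> by (simp add: open_Diff)
      then have "open ((UNIV - x ` {1..N}) \<times> (UNIV :: 'a set))" by (intro open_Times) auto
      then have ts: "(UNIV - x ` {1..N}) \<times> (UNIV :: 'a set) \<in> sets \<pi>" using spi by simp
      have "(UNIV - x ` {1..N}) \<times> UNIV \<in> null_sets \<pi>"
        using marg[OF os] P_outside ts by (auto simp: null_sets_def)
      from AE_not_in[OF this] show ?thesis by (rule eventually_mono) auto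
    qed
    have pw: "AE xy in \<pi>. ?psi xy + phi z (snd xy) \<le> ?C xy"
      using AE_fst
    proof (rule eventually_mono)
      fix xy :: "'a \<times> 'a" assume "fst xy \<in> x ` {1..N}"
      then obtain i where i: "i \<in> {1..N}" "fst xy = x i" by auto
      have "?psi xy = (\<Sum>k\<in>{1..N}. if k = i then z k else 0)"
      proof (intro sum.cong refl)
        fix k assume k: "k \<in> {1..N}"
        have "x i = x k \<longleftrightarrow> i = k" using distinct i(1) k by (meson inj_onD)
        then show "z k * indicator ({x k} \<times> UNIV) xy = (if k = i then z k else 0)"
          using i(2) by (cases xy) (auto simp: indicator_def)
      qed
      also have "\<dots> = z i" using i(1) by simp
      finally have "?psi xy = z i" .
      moreover have "phi z (snd xy) \<le> c i (snd xy) - z i" by (rule phi_le[OF i(1)])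
      moreover have "c i (snd xy) = ?C xy" unfolding c_def using i(2) by simp
      ultimately show "?psi xy + phi z (snd xy) \<le> ?C xy" by linarith
    qed
    have "g z = (\<integral>xy. ?psi xy + phi z (snd xy) \<partial>\<pi>)"
      unfolding g_def2 using int_psi int_phi_snd integral_psi integral_phi_snd
      by (simp add: Bochner_Integration.integral_add)
    also have "\<dots> \<le> (\<integral>xy. ?C xy \<partial>\<pi>)"
      using int_psi int_phi_snd intC pw by (intro integral_mono_AE) auto
    finally have "g z \<le> (\<integral>xy. ?C xy \<partial>\<pi>)" .
    then show ?thesis unfolding eqC by (rule ennreal_leI)
  qed
qed

end

lemma times_borel:
  fixes A :: "'a::euclidean_space set" and B :: "'b::euclidean_space set"
  assumes "A \<in> sets borel" "B \<in> sets borel"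
  shows "A \<times> B \<in> sets (borel :: ('a \<times> 'b) measure)"
proof -
  have "A \<times> B \<in> sets (borel \<Otimes>\<^sub>M borel)" using assms by (rule pair_measureI)
  then show ?thesis by (simp only: borel_prod)
qed

context otset begin

lemma S_unique: "y \<in> S i z \<Longrightarrow> k \<in> {1..N} \<Longrightarrow> i \<in> {1..N} \<Longrightarrow> y \<in> S k z \<longleftrightarrow> k = i"
  using S_disj[of z] unfolding disjoint_family_on_def by blast

lemma phi_on_S: "y \<in> S i z \<Longrightarrow> i \<in> {1..N} \<Longrightarrow> phi z y = c i y - z i"
proof -
  assume y: "y \<in> S i z" and i: "i \<in> {1..N}"
  have "c i y - z i \<le> phi z y"
  proof (rule phi_ge)
    fix k assume k: "k \<in> {1..N}"
    show "c i y - z i \<le> c k y - z k"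
    proof (cases "k = i")
      case False
      then have "c i y - z i < c k y - z k" using y k unfolding S_def by blast
      then show ?thesis by simp
    qed simp
  qed
  then show ?thesis using phi_le[OF i, of z y] by simp
qed

lemma upper:
  assumes mass: "\<And>i. i \<in> {1..N} \<Longrightarrow> measure Q (S i z) = p i"
  shows "OT_cost (\<lambda>u v. h (u - v)) P Q \<le> ennreal (g z)" "g z \<ge> 0"
proof -
  define T where "T y = (\<Sum>k\<in>{1..N}. indicator (S k z) y *\<^sub>R x k)" for y
  define \<zeta> where "\<zeta> y = (\<Sum>k\<in>{1..N}. indicator (S k z) y * z k)" for y
  have T_S: "T y = x i" "\<zeta> y = z i" if y: "y \<in> S i z" and i: "i \<in> {1..N}" for y i
  proof -
    have "T y = (\<Sum>k\<in>{1..N}. if k = i then x k else 0)"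
      unfolding T_def using S_unique[OF y _ i] by (intro sum.cong refl) (auto simp: indicator_def)
    then show "T y = x i" using i by simp
    have "\<zeta> y = (\<Sum>k\<in>{1..N}. if k = i then z k else 0)"
      unfolding \<zeta>_def using S_unique[OF y _ i] by (intro sum.cong refl) (auto simp: indicator_def)
    then show "\<zeta> y = z i" using i by simp
  qed
  have T_meas[measurable]: "T \<in> borel_measurable Q" unfolding T_def[abs_def] by measurable
  have zeta_meas[measurable]: "\<zeta> \<in> borel_measurable Q" unfolding \<zeta>_def[abs_def] by measurable
  have TP_meas: "(\<lambda>y. (T y, y)) \<in> Q \<rightarrow>\<^sub>M (borel :: ('a \<times> 'a) measure)"
  proof -
    have "(\<lambda>y. (T y, y)) \<in> Q \<rightarrow>\<^sub>M (borel \<Otimes>\<^sub>M borel)" by measurable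
    then show ?thesis by (simp only: borel_prod)
  qed
  define \<pi> where "\<pi> = distr Q borel (\<lambda>y. (T y, y))"
  have AE_S: "AE y in Q. \<exists>i\<in>{1..N}. y \<in> S i z"
    using AE_not_tie[of z] by (rule eventually_mono) (rule S_cover)
  have pi_coup: "\<pi> \<in> couplings P Q"
    unfolding couplings_def
  proof (intro CollectI conjI ballI)
    show "sets \<pi> = sets borel" unfolding \<pi>_def by simp
    show "prob_space \<pi>" unfolding \<pi>_def by (rule Q.prob_space_distr[OF TP_meas])
    fix A :: "'a set" assume A: "A \<in> sets borel"
    have "emeasure \<pi> (A \<times> UNIV) = emeasure Q ((\<lambda>y. (T y, y)) -` (A \<times> UNIV) \<inter> space Q)"
      unfolding \<pi>_def using A TP_meas by (intro emeasure_distr) (auto intro: times_borel)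
    also have "\<dots> = emeasure Q {y. T y \<in> A}" by (simp add: vimage_def)
    also have "\<dots> = emeasure Q (\<Union>k\<in>{k\<in>{1..N}. x k \<in> A}. S k z)"
    proof (rule emeasure_eq_AE)
      show "AE y in Q. (y \<in> {y. T y \<in> A}) = (y \<in> (\<Union>k\<in>{k \<in> {1..N}. x k \<in> A}. S k z))"
        using AE_S
      proof (rule eventually_mono)
        fix y assume "\<exists>i\<in>{1..N}. y \<in> S i z"
        then obtain i where i: "i \<in> {1..N}" "y \<in> S i z" by blast
        show "(y \<in> {y. T y \<in> A}) = (y \<in> (\<Union>k\<in>{k \<in> {1..N}. x k \<in> A}. S k z))"
          using T_S[OF i(2) i(1)] S_unique[OF i(2) _ i(1)] i by auto
      qed
      have "{y. T y \<in> A} = T -` A \<inter> space Q" by auto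
      then show "{y. T y \<in> A} \<in> sets Q" using A T_meas by (metis measurable_sets sets_Q_borel)
      show "(\<Union>k\<in>{k \<in> {1..N}. x k \<in> A}. S k z) \<in> sets Q" by auto
    qed
    also have "\<dots> = (\<Sum>k\<in>{k\<in>{1..N}. x k \<in> A}. emeasure Q (S k z))"
      using S_disj[of z] by (intro sum_emeasure[symmetric]) (auto simp: disjoint_family_on_def)
    also have "\<dots> = (\<Sum>k\<in>{k\<in>{1..N}. x k \<in> A}. ennreal (p k))"
      using mass by (intro sum.cong refl) (auto simp: Q.emeasure_eq_measure)
    also have "\<dots> = (\<Sum>k\<in>{1..N}. if x k \<in> A then ennreal (p k) else 0)"
      by (rule sum.inter_filter) simp
    also have "\<dots> = emeasure P A" using discrete_emeasure[OF A] by simp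
    finally show "emeasure \<pi> (A \<times> UNIV) = emeasure P A" .
    have "emeasure \<pi> (UNIV \<times> A) = emeasure Q ((\<lambda>y. (T y, y)) -` (UNIV \<times> A) \<inter> space Q)"
      unfolding \<pi>_def using A TP_meas by (intro emeasure_distr) (auto intro: times_borel)
    also have "(\<lambda>y. (T y, y)) -` (UNIV \<times> A) \<inter> space Q = A" by auto
    finally show "emeasure \<pi> (UNIV \<times> A) = emeasure Q A" .
  qed
  have AE_eq: "AE y in Q. h (T y - y) = phi z y + \<zeta> y"
    using AE_S
  proof (rule eventually_mono)
    fix y assume "\<exists>i\<in>{1..N}. y \<in> S i z"
    then obtain i where i: "i \<in> {1..N}" "y \<in> S i z" by blast
    show "h (T y - y) = phi z y + \<zeta> y"
      using T_S[OF i(2) i(1)] phi_on_S[OF i(2) i(1)] unfolding c_def by simp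
  qed
  have int_zeta: "integrable Q \<zeta>"
    unfolding \<zeta>_def[abs_def]
    by (intro Bochner_Integration.integrable_sum integrable_mult_left integrable_real_indicator) (auto simp: less_top[symmetric])
  have integral_zeta: "(\<integral>y. \<zeta> y \<partial>Q) = (\<Sum>k\<in>{1..N}. z k * p k)"
  proof -
    have "(\<integral>y. \<zeta> y \<partial>Q) = (\<Sum>k\<in>{1..N}. \<integral>y. indicator (S k z) y * z k \<partial>Q)"
      unfolding \<zeta>_def
      by (intro Bochner_Integration.integral_sum integrable_mult_left integrable_real_indicator) (auto simp: less_top[symmetric])
    also have "\<dots> = (\<Sum>k\<in>{1..N}. z k * p k)"
      using mass by (intro sum.cong refl) (simp add: less_top[symmetric])
    finally show ?thesis .
  qed
  have g_eq: "g z = (\<integral>y. phi z y + \<zeta> y \<partial>Q)"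
    unfolding g_def2 using phi_int int_zeta integral_zeta by (simp add: Bochner_Integration.integral_add)
  have AE_nn: "AE y in Q. 0 \<le> phi z y + \<zeta> y"
    using AE_eq by (rule eventually_mono) (metis h_nonneg)
  show "g z \<ge> 0" unfolding g_eq using AE_nn by (rule integral_nonneg_AE)
  have "(\<integral>\<^sup>+ xy. ennreal (h (fst xy - snd xy)) \<partial>\<pi>) = (\<integral>\<^sup>+ y. ennreal (h (T y - y)) \<partial>Q)"
    unfolding \<pi>_def using cost_meas TP_meas by (subst nn_integral_distr) auto
  also have "\<dots> = (\<integral>\<^sup>+ y. ennreal (phi z y + \<zeta> y) \<partial>Q)"
    using AE_eq by (intro nn_integral_cong_AE) (rule eventually_mono, auto)
  also have "\<dots> = ennreal (\<integral>y. phi z y + \<zeta> y \<partial>Q)"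
    using phi_int int_zeta AE_nn by (intro nn_integral_eq_integral) auto
  also have "\<dots> = ennreal (g z)" using g_eq by simp
  finally have "(\<integral>\<^sup>+ xy. ennreal (h (fst xy - snd xy)) \<partial>\<pi>) = ennreal (g z)" .
  then show "OT_cost (\<lambda>u v. h (u - v)) P Q \<le> ennreal (g z)"
    unfolding OT_cost_def using pi_coup by (metis (no_types, lifting) INF_lower)
qed

end

context otset begin

lemma p_le1: "i \<in> {1..N} \<Longrightarrow> p i \<le> 1"
proof -
  assume i: "i \<in> {1..N}"
  have "p i \<le> sum p {1..N}" using p_pos i by (intro member_le_sum) (auto simp: less_imp_le)
  then show ?thesis using p_sum by simp
qed

lemma phi_lip1: "phi z y \<le> phi w y + (\<Sum>i\<in>{1..N}. \<bar>z i - w i\<bar>)"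
proof -
  obtain i where i: "i \<in> {1..N}" "phi w y = c i y - w i" using phi_attained by blast
  have "phi z y \<le> c i y - z i" by (rule phi_le[OF i(1)])
  also have "\<dots> \<le> phi w y + \<bar>z i - w i\<bar>" using i(2) by simp
  also have "\<bar>z i - w i\<bar> \<le> (\<Sum>i\<in>{1..N}. \<bar>z i - w i\<bar>)"
    using i(1) by (intro member_le_sum) auto
  finally show ?thesis by simp
qed

lemma g_lip: "\<bar>g z - g w\<bar> \<le> 2 * (\<Sum>i\<in>{1..N}. \<bar>z i - w i\<bar>)"
proof -
  let ?D = "\<Sum>i\<in>{1..N}. \<bar>z i - w i\<bar>"
  have sym: "(\<Sum>i\<in>{1..N}. \<bar>w i - z i\<bar>) = ?D" by (simp add: abs_minus_commute)
  have pw: "\<bar>phi z y - phi w y\<bar> \<le> ?D" for y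
    using phi_lip1[of z y w] phi_lip1[of w y z] sym by linarith
  have i1: "\<bar>(\<integral>y. phi z y - phi w y \<partial>Q)\<bar> \<le> ?D"
  proof -
    have "\<bar>(\<integral>y. phi z y - phi w y \<partial>Q)\<bar> \<le> (\<integral>y. \<bar>phi z y - phi w y\<bar> \<partial>Q)"
      by (rule integral_abs_bound)
    also have "\<dots> \<le> (\<integral>y. ?D \<partial>Q)"
      using phi_int pw by (intro integral_mono) auto
    also have "\<dots> = ?D" using Q.prob_space by simp
    finally show ?thesis .
  qed
  have s1: "\<bar>(\<Sum>i\<in>{1..N}. z i * p i) - (\<Sum>i\<in>{1..N}. w i * p i)\<bar> \<le> ?D"
  proof -
    have "\<bar>(\<Sum>i\<in>{1..N}. z i * p i) - (\<Sum>i\<in>{1..N}. w i * p i)\<bar> = \<bar>\<Sum>i\<in>{1..N}. (z i - w i) * p i\<bar>"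
      by (simp add: sum_subtractf left_diff_distrib)
    also have "\<dots> \<le> (\<Sum>i\<in>{1..N}. \<bar>(z i - w i) * p i\<bar>)" by (rule sum_abs)
    also have "\<dots> \<le> ?D"
    proof (intro sum_mono)
      fix i assume i: "i \<in> {1..N}"
      have "\<bar>(z i - w i) * p i\<bar> = \<bar>z i - w i\<bar> * p i" using p_pos i by (simp add: abs_mult less_imp_le)
      also have "\<dots> \<le> \<bar>z i - w i\<bar> * 1" using p_le1[OF i] by (intro mult_left_mono) auto
      finally show "\<bar>(z i - w i) * p i\<bar> \<le> \<bar>z i - w i\<bar>" by simp
    qed
    finally show ?thesis .
  qed
  have "g z - g w = ((\<Sum>i\<in>{1..N}. z i * p i) - (\<Sum>i\<in>{1..N}. w i * p i)) + (\<integral>y. phi z y - phi w y \<partial>Q)"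
    unfolding g_def2 using phi_int by (simp add: Bochner_Integration.integral_diff)
  then show ?thesis using i1 s1 by linarith
qed

lemma g_cont: "continuous_map (product_topology (\<lambda>_. euclideanreal) {1..N}) euclideanreal g"
  unfolding continuous_map_def
proof (intro conjI allI impI)
  show "g \<in> topspace (product_topology (\<lambda>_. euclideanreal) {1..N}) \<rightarrow> topspace euclideanreal" by simp
  fix U :: "real set" assume "openin euclideanreal U"
  then have U: "open U" by simp
  let ?X = "product_topology (\<lambda>_. euclideanreal) {1..N}"
  show "openin ?X {z \<in> topspace ?X. g z \<in> U}"
  proof (subst openin_subopen, intro ballI)
    fix z0 assume z0: "z0 \<in> {z \<in> topspace ?X. g z \<in> U}"
    then obtain e where e: "e > 0" "ball (g z0) e \<subseteq> U" using U open_contains_ball by blast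
    define \<eta> where "\<eta> = e / (2 * real N + 2)"
    have eta: "\<eta> > 0" unfolding \<eta>_def using e by (simp add: field_simps add_pos_nonneg)
    have Neta: "2 * (real N * \<eta>) < e" unfolding \<eta>_def using e by (simp add: field_simps)
    define T where "T = (\<Pi>\<^sub>E i\<in>{1..N}. ball (z0 i) \<eta>)"
    show "\<exists>T. openin ?X T \<and> z0 \<in> T \<and> T \<subseteq> {z \<in> topspace ?X. g z \<in> U}"
    proof (intro exI conjI)
      show "openin ?X T" unfolding T_def by (subst openin_PiE) auto
      show "z0 \<in> T" unfolding T_def using z0 eta by (auto simp: PiE_iff)
      show "T \<subseteq> {z \<in> topspace ?X. g z \<in> U}"
      proof
        fix z assume zT: "z \<in> T"
        have "(\<Sum>i\<in>{1..N}. \<bar>z i - z0 i\<bar>) < (\<Sum>i\<in>{1..N}. \<eta>)"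
        proof (rule sum_strict_mono)
          fix i assume "i \<in> {1..N}"
          then have "z i \<in> ball (z0 i) \<eta>" using zT unfolding T_def by auto
          then show "\<bar>z i - z0 i\<bar> < \<eta>" by (simp add: dist_real_def abs_minus_commute)
        qed (use fin_ne in auto)
        then have "2 * (\<Sum>i\<in>{1..N}. \<bar>z i - z0 i\<bar>) < e" using Neta by simp
        then have "\<bar>g z - g z0\<bar> < e" using g_lip[of z z0] by linarith
        then have "g z \<in> U" using e(2) by (auto simp: dist_real_def abs_minus_commute)
        moreover have "z \<in> topspace ?X" using zT unfolding T_def by (auto simp: PiE_iff)
        ultimately show "z \<in> {z \<in> topspace ?X. g z \<in> U}" by simp
      qed
    qed
  qed
qed

lemma tail_small:
  fixes f :: "'a \<Rightarrow> real"
  assumes f[measurable]: "f \<in> borel_measurable Q" and eps: "eps > 0"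
  shows "\<forall>\<^sub>F n in sequentially. measure Q {y. f y \<ge> real n} < eps"
proof -
  define A where "A n = {y. f y \<ge> real n}" for n :: nat
  have As: "A n \<in> sets Q" for n unfolding A_def by (rule pred_sets) measurable
  have dec: "decseq A" unfolding A_def decseq_def by auto
  have empty: "(\<Inter>n. A n) = {}"
  proof (rule equals0I)
    fix y assume "y \<in> (\<Inter>n. A n)"
    moreover obtain n :: nat where "f y < real n" using reals_Archimedean2 by blast
    ultimately have "real n \<le> f y" "f y < real n" unfolding A_def by blast+
    then show False by linarith
  qed
  have "(\<lambda>n. measure Q (A n)) \<longlonglongrightarrow> measure Q (\<Inter>n. A n)"
    using As dec by (intro Q.finite_Lim_measure_decseq) auto
  then have "(\<lambda>n. measure Q (A n)) \<longlonglongrightarrow> 0" unfolding empty by simp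
  from order_tendstoD(2)[OF this eps] show ?thesis unfolding A_def .
qed

lemma exists_R: "\<exists>R>0. (\<forall>i\<in>{1..N}. i \<noteq> 1 \<longrightarrow> measure Q {y. c 1 y - c i y \<ge> R} < p i)
                    \<and> (\<forall>i\<in>{1..N}. measure Q {y. c i y - c 1 y \<ge> R} < p 1)"
proof -
  have p1: "p 1 > 0" using p_pos N by auto
  have ev: "\<forall>\<^sub>F n in sequentially. (1::nat) \<le> n \<and>
      (\<forall>i\<in>{1..N}. (i \<noteq> 1 \<longrightarrow> measure Q {y. c 1 y - c i y \<ge> real n} < p i)
                   \<and> measure Q {y. c i y - c 1 y \<ge> real n} < p 1)"
  proof (intro eventually_conj eventually_ball_finite ballI)
    show "\<forall>\<^sub>F n in sequentially. (1::nat) \<le> n" by (rule eventually_ge_at_top)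
    show "finite {1..N}" by simp
    fix i assume i: "i \<in> {1..N}"
    have pi: "p i > 0" using p_pos i by auto
    have m1: "(\<lambda>y. c 1 y - c i y) \<in> borel_measurable Q" by measurable
    have m2: "(\<lambda>y. c i y - c 1 y) \<in> borel_measurable Q" by measurable
    have "\<forall>\<^sub>F n in sequentially. measure Q {y. c 1 y - c i y \<ge> real n} < p i"
      by (rule tail_small[OF m1 pi])
    then show "\<forall>\<^sub>F n in sequentially. i \<noteq> 1 \<longrightarrow> measure Q {y. c 1 y - c i y \<ge> real n} < p i"
      by (rule eventually_mono) simp
    show "\<forall>\<^sub>F n in sequentially. measure Q {y. c i y - c 1 y \<ge> real n} < p 1"
      by (rule tail_small[OF m2 p1])
  qed
  then obtain M where "\<forall>n\<ge>M. (1::nat) \<le> n \<and>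
      (\<forall>i\<in>{1..N}. (i \<noteq> 1 \<longrightarrow> measure Q {y. c 1 y - c i y \<ge> real n} < p i)
                   \<and> measure Q {y. c i y - c 1 y \<ge> real n} < p 1)"
    unfolding eventually_sequentially by blast
  then have M: "(1::nat) \<le> M \<and>
      (\<forall>i\<in>{1..N}. (i \<noteq> 1 \<longrightarrow> measure Q {y. c 1 y - c i y \<ge> real M} < p i)
                   \<and> measure Q {y. c i y - c 1 y \<ge> real M} < p 1)" by blast
  have "real M > 0" using M by simp
  then show ?thesis using M by blast
qed

end

context otset begin

lemma exists_balanced:
  "\<exists>z. z \<in> extensional {1..N} \<and> z 1 = 0 \<and> (\<forall>i\<in>{1..N}. measure Q (S i z) = p i)"
proof -
  obtain R where R: "R > 0"
    and c1: "\<And>i. i \<in> {1..N} \<Longrightarrow> i \<noteq> 1 \<Longrightarrow> measure Q {y. c 1 y - c i y \<ge> R} < p i"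
    and c2: "\<And>i. i \<in> {1..N} \<Longrightarrow> measure Q {y. c i y - c 1 y \<ge> R} < p 1"
    using exists_R by blast
  have one: "(1::nat) \<in> {1..N}" using N by simp
  define B where "B = (\<Pi>\<^sub>E i\<in>{1..N}. if i = 1 then {0} else {-R..R})"
  let ?X = "product_topology (\<lambda>_. euclideanreal) {1..N}"
  have cB: "compactin ?X B" unfolding B_def by (subst compactin_PiE) auto
  have "compactin euclideanreal (g ` B)" by (rule image_compactin[OF cB g_cont])
  then have cgB: "compact (g ` B)" by simp
  have "(\<lambda>i. if i \<in> {1..N} then 0 else undefined) \<in> B" unfolding B_def using R by (auto simp: PiE_iff extensional_def)
  then have "g ` B \<noteq> {}" by blast
  then obtain s where s: "s \<in> g ` B" "\<And>t. t \<in> g ` B \<Longrightarrow> t \<le> s"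
    using compact_attains_sup[OF cgB] by blast
  then obtain zs where zsB: "zs \<in> B" and zmax: "\<And>z. z \<in> B \<Longrightarrow> g z \<le> g zs" by blast
  have zs_ext: "zs \<in> extensional {1..N}" using zsB unfolding B_def by (simp add: PiE_iff)
  have zs1: "zs 1 = 0"
  proof -
    have "zs 1 \<in> (if (1::nat) = 1 then {0} else {-R..R})" using zsB one unfolding B_def by blast
    then show ?thesis by simp
  qed
  have zsin: "zs k \<in> (if k = 1 then {0} else {-R..R})" if "k \<in> {1..N}" for k
    using zsB that unfolding B_def by blast
  have zsR: "-R \<le> zs i" "zs i \<le> R" if "i \<in> {1..N}" "i \<noteq> 1" for i
    using zsin[OF that(1)] that(2) by auto
  have updB: "zs(i := v) \<in> B" if i: "i \<in> {1..N}" "i \<noteq> 1" and v: "-R \<le> v" "v \<le> R" for i v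
  proof -
    have "(zs(i := v)) k \<in> (if k = 1 then {0} else {-R..R})" if k: "k \<in> {1..N}" for k
    proof (cases "k = i")
      case True then show ?thesis using i v by simp
    next
      case False then show ?thesis using zsin[OF k] by simp
    qed
    moreover have "zs(i := v) \<in> extensional {1..N}" using zs_ext i(1) by (auto simp: extensional_def)
    ultimately show ?thesis unfolding B_def by (auto simp: PiE_iff)
  qed
  have step1: "zs i > -R" if i: "i \<in> {1..N}" "i \<noteq> 1" for i
  proof (rule ccontr)
    assume "\<not> zs i > -R"
    then have zi: "zs i = -R" using zsR[OF i] by simp
    have "measure Q (Cl i zs) \<ge> p i"
    proof (rule incr_cond[OF i(1), of "2 * R"])
      show "0 < 2 * R" using R by simp
      fix e assume e: "0 < e" "e < 2 * R"
      show "g (zs(i := zs i + e)) \<le> g zs" using zi e by (intro zmax updB i) auto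
    qed
    moreover have "measure Q (Cl i zs) \<le> measure Q {y. c 1 y - c i y \<ge> R}"
    proof (rule Q.finite_measure_mono)
      show "Cl i zs \<subseteq> {y. c 1 y - c i y \<ge> R}"
      proof
        fix y assume "y \<in> Cl i zs"
        then have "c i y - zs i \<le> c 1 y - zs 1" using one i unfolding Cl_def by auto
        then show "y \<in> {y. c 1 y - c i y \<ge> R}" using zi zs1 by simp
      qed
      show "{y. c 1 y - c i y \<ge> R} \<in> sets Q" by (rule pred_sets) measurable
    qed
    ultimately show False using c1[OF i] by simp
  qed
  have step2: "measure Q (S i zs) \<le> p i" if i: "i \<in> {1..N}" "i \<noteq> 1" for i
  proof (rule decr_cond[OF i(1), of "zs i + R"])
    show "0 < zs i + R" using step1[OF i] by simp
    fix e assume e: "0 < e" "e < zs i + R"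
    show "g (zs(i := zs i - e)) \<le> g zs" using e zsR[OF i] by (intro zmax updB i) auto
  qed
  have sumrest: "(\<Sum>k\<in>{1..N}. f k) = f 1 + (\<Sum>k\<in>{1..N} - {1}. f k)" for f :: "nat \<Rightarrow> real"
    using one by (simp add: sum.remove)
  have step3: "zs i < R" if i: "i \<in> {1..N}" "i \<noteq> 1" for i
  proof (rule ccontr)
    assume "\<not> zs i < R"
    then have zi: "zs i = R" using zsR[OF i] by simp
    have "measure Q (Cl 1 zs) \<le> measure Q {y. c i y - c 1 y \<ge> R}"
    proof (rule Q.finite_measure_mono)
      show "Cl 1 zs \<subseteq> {y. c i y - c 1 y \<ge> R}"
      proof
        fix y assume "y \<in> Cl 1 zs"
        then have "c 1 y - zs 1 \<le> c i y - zs i" using one i unfolding Cl_def by auto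
        then show "y \<in> {y. c i y - c 1 y \<ge> R}" using zi zs1 by simp
      qed
      show "{y. c i y - c 1 y \<ge> R} \<in> sets Q" by (rule pred_sets) measurable
    qed
    moreover have "measure Q (S 1 zs) \<le> measure Q (Cl 1 zs)"
      using S_Cl by (intro Q.finite_measure_mono) auto
    ultimately have lt: "measure Q (S 1 zs) < p 1" using c2[OF i(1)] by simp
    have "1 = (\<Sum>k\<in>{1..N}. measure Q (S k zs))" using sum_S by simp
    also have "\<dots> = measure Q (S 1 zs) + (\<Sum>k\<in>{1..N} - {1}. measure Q (S k zs))" by (rule sumrest)
    also have "\<dots> < p 1 + (\<Sum>k\<in>{1..N} - {1}. p k)"
    proof -
      have "(\<Sum>k\<in>{1..N} - {1}. measure Q (S k zs)) \<le> (\<Sum>k\<in>{1..N} - {1}. p k)"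
        using step2 by (intro sum_mono) auto
      then show ?thesis using lt by simp
    qed
    also have "\<dots> = 1" using sumrest[of p] p_sum by simp
    finally show False by simp
  qed
  have step4: "measure Q (S i zs) = p i" if i: "i \<in> {1..N}" "i \<noteq> 1" for i
  proof -
    have "measure Q (Cl i zs) \<ge> p i"
    proof (rule incr_cond[OF i(1), of "R - zs i"])
      show "0 < R - zs i" using step3[OF i] by simp
      fix e assume e: "0 < e" "e < R - zs i"
      show "g (zs(i := zs i + e)) \<le> g zs" using e zsR[OF i] by (intro zmax updB i) auto
    qed
    then show ?thesis using step2[OF i] measure_Cl_S[OF i(1), of zs] by simp
  qed
  have step5: "measure Q (S 1 zs) = p 1"
  proof -
    have "(\<Sum>k\<in>{1..N} - {1}. measure Q (S k zs)) = (\<Sum>k\<in>{1..N} - {1}. p k)"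
      using step4 by (intro sum.cong) auto
    then show ?thesis using sumrest[of "\<lambda>k. measure Q (S k zs)"] sumrest[of p] sum_S[of zs] p_sum by simp
  qed
  have "\<forall>i\<in>{1..N}. measure Q (S i zs) = p i"
    using step4 step5 by (metis)
  then show ?thesis using zs_ext zs1 by blast
qed

end

lemma continuous_on_Min_finite:
  fixes f :: "'i \<Rightarrow> 'a::topological_space \<Rightarrow> real"
  assumes "finite K" "K \<noteq> {}" "\<And>k. k \<in> K \<Longrightarrow> continuous_on UNIV (f k)"
  shows "continuous_on UNIV (\<lambda>y. Min ((\<lambda>k. f k y) ` K))"
  using assms
proof (induction K rule: finite_ne_induct)
  case (singleton k) then show ?case by simp
next
  case (insert k K)
  have eq: "(\<lambda>y. Min ((\<lambda>k. f k y) ` insert k K)) = (\<lambda>y. min (f k y) (Min ((\<lambda>k. f k y) ` K)))"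
    using insert.hyps by (auto simp: Min_insert)
  show ?case unfolding eq using insert by (intro continuous_on_min) auto
qed

context otset begin

lemma AE_supp: "AE y in Q. y \<in> measure_support Q"
proof -
  define F where "F = {B :: 'a set. open B \<and> emeasure Q B = 0}"
  obtain F' where F': "F' \<subseteq> F" "countable F'" "\<Union>F' = \<Union>F"
    using Lindelof[of F] unfolding F_def by blast
  have null: "\<Union>F' \<in> null_sets Q"
  proof -
    have "(\<Union>B\<in>F'. B) \<in> null_sets Q"
    proof (rule null_sets_UN')
      show "countable F'" by (rule F'(2))
      fix B assume "B \<in> F'"
      then have B: "open B" "emeasure Q B = 0" using F'(1) unfolding F_def by auto
      then have "B \<in> sets Q" by simp
      then show "B \<in> null_sets Q" using B(2) by (rule null_setsI[rotated])
    qed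
    then show ?thesis by simp
  qed
  show ?thesis
  proof (rule AE_I'[OF null])
    show "{y \<in> space Q. y \<notin> measure_support Q} \<subseteq> \<Union>F'"
    proof
      fix y assume "y \<in> {y \<in> space Q. y \<notin> measure_support Q}"
      then obtain e where e: "e > 0" "\<not> emeasure Q (ball y e) > 0" unfolding measure_support_def by auto
      then have "ball y e \<in> F" unfolding F_def by (simp add: not_gr_zero)
      moreover have "y \<in> ball y e" using e(1) by simp
      ultimately have "y \<in> \<Union>F" by blast
      then show "y \<in> \<Union>F'" using F'(3) by simp
    qed
  qed
qed

lemma open_null_supp: "open V \<Longrightarrow> emeasure Q V = 0 \<Longrightarrow> V \<inter> measure_support Q = {}"
proof (rule ccontr)
  assume V: "open V" "emeasure Q V = 0" and "V \<inter> measure_support Q \<noteq> {}"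
  then obtain y where y: "y \<in> V" "y \<in> measure_support Q" by blast
  obtain e where e: "e > 0" "ball y e \<subseteq> V" using V(1) y(1) open_contains_ball by blast
  have "emeasure Q (ball y e) > 0" using y(2) e(1) unfolding measure_support_def by auto
  moreover have "emeasure Q (ball y e) \<le> emeasure Q V"
    using e(2) V(1) by (intro emeasure_mono) auto
  ultimately show False using V(2) by simp
qed

definition mI :: "nat set \<Rightarrow> (nat \<Rightarrow> real) \<Rightarrow> 'a \<Rightarrow> real" where
  "mI K z y = Min ((\<lambda>k. c k y - z k) ` K)"

lemma mI_le: "finite K \<Longrightarrow> k \<in> K \<Longrightarrow> mI K z y \<le> c k y - z k"
  unfolding mI_def by (rule Min_le) auto

lemma mI_attained: "finite K \<Longrightarrow> K \<noteq> {} \<Longrightarrow> \<exists>k\<in>K. mI K z y = c k y - z k"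
proof -
  assume K: "finite K" "K \<noteq> {}"
  have "mI K z y \<in> (\<lambda>k. c k y - z k) ` K" unfolding mI_def using K by (intro Min_in) auto
  then show ?thesis by auto
qed

lemma mI_ge: "finite K \<Longrightarrow> K \<noteq> {} \<Longrightarrow> (\<And>k. k \<in> K \<Longrightarrow> v \<le> c k y - z k) \<Longrightarrow> v \<le> mI K z y"
  unfolding mI_def by (subst Min_ge_iff) auto

lemma mI_cont: "finite K \<Longrightarrow> K \<noteq> {} \<Longrightarrow> continuous_on UNIV (mI K z)"
  unfolding mI_def[abs_def]
  by (rule continuous_on_Min_finite[where f="\<lambda>k y. c k y - z k"]) (auto intro!: continuous_intros c_cont)

lemma mI_meas[measurable]: "finite K \<Longrightarrow> mI K z \<in> borel_measurable Q"
  unfolding mI_def[abs_def] by measurable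

lemma mass_U:
  assumes mass: "\<And>i. i \<in> {1..N} \<Longrightarrow> measure Q (S i z) = p i"
    and I: "I \<subseteq> {1..N}" "I \<noteq> {}" and J: "J = {1..N} - I" "J \<noteq> {}"
  shows "measure Q {y. mI I z y \<le> mI J z y} = (\<Sum>k\<in>I. p k)"
proof -
  have fI: "finite I" using I(1) finite_subset by blast
  have fJ: "finite J" using J(1) by simp
  have "AE y in Q. (y \<in> {y. mI I z y \<le> mI J z y}) = (y \<in> (\<Union>k\<in>I. S k z))"
    using AE_not_tie[of z]
  proof (rule eventually_mono)
    fix y assume "y \<notin> ties z"
    then obtain i where i: "i \<in> {1..N}" "y \<in> S i z" using S_cover by blast
    have lt: "c i y - z i < c j y - z j" if "j \<in> {1..N}" "j \<noteq> i" for j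
      using i(2) that unfolding S_def by blast
    show "(y \<in> {y. mI I z y \<le> mI J z y}) = (y \<in> (\<Union>k\<in>I. S k z))"
    proof (cases "i \<in> I")
      case True
      have a: "mI I z y \<le> c i y - z i" by (rule mI_le[OF fI True])
      obtain j where j: "j \<in> J" "mI J z y = c j y - z j" using mI_attained[OF fJ J(2)] by blast
      have "j \<in> {1..N}" "j \<noteq> i" using j(1) J(1) True by auto
      then have "c i y - z i < c j y - z j" by (rule lt)
      then have "y \<in> {y. mI I z y \<le> mI J z y}" using a j(2) by simp
      moreover have "y \<in> (\<Union>k\<in>I. S k z)" using True i(2) by blast
      ultimately show ?thesis by simp
    next
      case False
      have iJ: "i \<in> J" using False i(1) J(1) by simp
      have a: "mI J z y \<le> c i y - z i" by (rule mI_le[OF fJ iJ])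
      obtain k where k: "k \<in> I" "mI I z y = c k y - z k" using mI_attained[OF fI I(2)] by blast
      have "k \<in> {1..N}" "k \<noteq> i" using k(1) I(1) False by auto
      then have "c i y - z i < c k y - z k" by (rule lt)
      then have "y \<notin> {y. mI I z y \<le> mI J z y}" using a k(2) by simp
      moreover have "y \<notin> (\<Union>k\<in>I. S k z)"
        using S_unique[OF i(2) _ i(1)] I(1) False by blast
      ultimately show ?thesis by simp
    qed
  qed
  then have "emeasure Q {y. mI I z y \<le> mI J z y} = emeasure Q (\<Union>k\<in>I. S k z)"
    using fI fJ by (intro emeasure_eq_AE) (auto intro: pred_sets)
  then have "measure Q {y. mI I z y \<le> mI J z y} = measure Q (\<Union>k\<in>I. S k z)"
    by (simp add: measure_def)
  also have "\<dots> = (\<Sum>k\<in>I. measure Q (S k z))"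
    using S_disj[of z] I(1) fI
    by (intro measure_finite_Union) (auto simp: disjoint_family_on_def)
  also have "\<dots> = (\<Sum>k\<in>I. p k)" using mass I(1) by (intro sum.cong) auto
  finally show ?thesis .
qed

end

context otset begin

lemma uniq_aux:
  assumes mz: "\<And>i. i \<in> {1..N} \<Longrightarrow> measure Q (S i z) = p i"
    and mw: "\<And>i. i \<in> {1..N} \<Longrightarrow> measure Q (S i w) = p i"
    and z1: "z 1 = 0" and w1: "w 1 = 0"
    and i0: "i0 \<in> {1..N}" and pos: "w i0 - z i0 > 0"
  shows False
proof -
  define \<delta> where "\<delta> k = w k - z k" for k
  have one: "(1::nat) \<in> {1..N}" using N by simp
  define M where "M = Max (\<delta> ` {1..N})"
  have Mge: "\<delta> k \<le> M" if "k \<in> {1..N}" for k unfolding M_def using that by (intro Max_ge) auto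
  have Mpos: "M > 0" using Mge[OF i0] pos unfolding \<delta>_def by simp
  have "M \<in> \<delta> ` {1..N}" unfolding M_def using fin_ne by (intro Max_in) auto
  then obtain iM where iM: "iM \<in> {1..N}" "\<delta> iM = M" by auto
  define I where "I = {k\<in>{1..N}. \<delta> k = M}"
  define J where "J = {1..N} - I"
  have I_sub: "I \<subseteq> {1..N}" unfolding I_def by auto
  have I_ne: "I \<noteq> {}" using iM unfolding I_def by auto
  have fI: "finite I" using I_sub finite_subset by blast
  have oneJ: "1 \<in> J" unfolding J_def I_def using one z1 w1 Mpos unfolding \<delta>_def by auto
  have J_ne: "J \<noteq> {}" using oneJ by auto
  have fJ: "finite J" unfolding J_def by simp
  define M' where "M' = Max (\<delta> ` J)"
  have M'ge: "\<delta> k \<le> M'" if "k \<in> J" for k unfolding M'_def using that fJ by (intro Max_ge) auto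
  have "M' \<in> \<delta> ` J" unfolding M'_def using fJ J_ne by (intro Max_in) auto
  then obtain jM where jM: "jM \<in> J" "\<delta> jM = M'" by auto
  have "M' < M"
  proof -
    have "jM \<in> {1..N}" "jM \<notin> I" using jM(1) unfolding J_def by auto
    then have "\<delta> jM \<le> M" "\<delta> jM \<noteq> M" using Mge unfolding I_def by auto
    then show ?thesis using jM(2) by simp
  qed
  define gap where "gap = M - M'"
  have gap: "gap > 0" unfolding gap_def using \<open>M' < M\<close> by simp
  define F where "F y = mI J z y - mI I z y" for y
  define Uz where "Uz = {y. mI I z y \<le> mI J z y}"
  define Uw where "Uw = {y. mI I w y \<le> mI J w y}"
  have Uz_sets: "Uz \<in> sets Q" unfolding Uz_def using fI fJ by (intro pred_sets) measurable
  have Uw_sets: "Uw \<in> sets Q" unfolding Uw_def using fI fJ by (intro pred_sets) measurable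
  have mUz: "measure Q Uz = (\<Sum>k\<in>I. p k)" unfolding Uz_def
    by (rule mass_U[OF mz I_sub I_ne J_def J_ne])
  have mUw: "measure Q Uw = (\<Sum>k\<in>I. p k)" unfolding Uw_def
    by (rule mass_U[OF mw I_sub I_ne J_def J_ne])
  have mIw: "mI I w y = mI I z y - M" for y
  proof (rule antisym)
    obtain k where k: "k \<in> I" "mI I z y = c k y - z k" using mI_attained[OF fI I_ne] by blast
    have "mI I w y \<le> c k y - w k" by (rule mI_le[OF fI k(1)])
    also have "\<dots> = mI I z y - M" using k unfolding I_def \<delta>_def by auto
    finally show "mI I w y \<le> mI I z y - M" .
    show "mI I z y - M \<le> mI I w y"
    proof (rule mI_ge[OF fI I_ne])
      fix k assume k: "k \<in> I"
      have "mI I z y \<le> c k y - z k" by (rule mI_le[OF fI k])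
      then show "mI I z y - M \<le> c k y - w k" using k unfolding I_def \<delta>_def by auto
    qed
  qed
  have mJw: "mI J z y - M' \<le> mI J w y" for y
  proof (rule mI_ge[OF fJ J_ne])
    fix k assume k: "k \<in> J"
    have "mI J z y \<le> c k y - z k" by (rule mI_le[OF fJ k])
    moreover have "\<delta> k \<le> M'" by (rule M'ge[OF k])
    ultimately show "mI J z y - M' \<le> c k y - w k" unfolding \<delta>_def by simp
  qed
  have toUw: "y \<in> Uw" if "F y > - gap" for y
  proof -
    have "mI I w y = mI I z y - M" by (rule mIw)
    also have "\<dots> < mI J z y - M'" using that unfolding F_def gap_def by simp
    also have "\<dots> \<le> mI J w y" by (rule mJw)
    finally show ?thesis unfolding Uw_def by simp
  qed
  have UzUw: "Uz \<subseteq> Uw"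
  proof
    fix y assume "y \<in> Uz"
    then have "F y \<ge> 0" unfolding Uz_def F_def by simp
    then show "y \<in> Uw" using gap by (intro toUw) simp
  qed
  define V where "V = {y. - gap < F y \<and> F y < 0}"
  have VU: "V \<subseteq> Uw - Uz"
  proof
    fix y assume y: "y \<in> V"
    then have "y \<in> Uw" using toUw unfolding V_def by simp
    moreover have "y \<notin> Uz" using y unfolding V_def Uz_def F_def by simp
    ultimately show "y \<in> Uw - Uz" by simp
  qed
  have F_cont: "continuous_on UNIV F"
    unfolding F_def[abs_def] using mI_cont[OF fJ J_ne] mI_cont[OF fI I_ne]
    by (intro continuous_intros) auto
  have V_open: "open V"
  proof -
    have "V = {y. - gap < F y} \<inter> {y. F y < 0}" unfolding V_def by auto
    moreover have "open {y. - gap < F y}" by (intro open_Collect_less continuous_on_const F_cont)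
    moreover have "open {y. F y < 0}" by (intro open_Collect_less continuous_on_const F_cont)
    ultimately show ?thesis by auto
  qed
  have "measure Q V \<le> measure Q (Uw - Uz)"
    using VU Uw_sets Uz_sets by (intro Q.finite_measure_mono) auto
  also have "\<dots> = measure Q Uw - measure Q Uz"
    using Uw_sets Uz_sets UzUw by (rule Q.finite_measure_Diff)
  also have "\<dots> = 0" using mUz mUw by simp
  finally have "measure Q V \<le> 0" .
  then have "measure Q V = 0" using measure_nonneg[of Q V] by linarith
  then have "emeasure Q V = 0" using V_open by (simp add: Q.emeasure_eq_measure)
  then have Vsupp: "V \<inter> measure_support Q = {}" using V_open by (intro open_null_supp)
  let ?supp = "measure_support Q"
  have conn: "connected (F ` ?supp)"
    using supp_conn F_cont by (intro connected_continuous_image) (auto intro: continuous_on_subset)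
  have sumI_pos: "(\<Sum>k\<in>I. p k) > 0"
    using fI I_ne I_sub p_pos by (intro sum_pos) auto
  have sumI_lt: "(\<Sum>k\<in>I. p k) < 1"
  proof -
    have sub: "I \<subseteq> {1..N} - {1}" using I_sub oneJ unfolding J_def by auto
    have "(\<Sum>k\<in>I. p k) \<le> (\<Sum>k\<in>{1..N} - {1}. p k)"
      using sub p_pos by (intro sum_mono2) (auto simp: less_imp_le)
    also have "\<dots> = 1 - p 1"
    proof -
      have "sum p {1..N} = p 1 + sum p ({1..N} - {1})" using one by (intro sum.remove) auto
      then show ?thesis using p_sum by simp
    qed
    finally have "(\<Sum>k\<in>I. p k) \<le> 1 - p 1" .
    moreover have "p 1 > 0" using p_pos one by blast
    ultimately show ?thesis by linarith
  qed
  show False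
  proof (cases "\<exists>y1\<in>?supp. F y1 \<ge> 0")
    case True
    then obtain y1 where y1: "y1 \<in> ?supp" "F y1 \<ge> 0" by blast
    show False
    proof (cases "\<exists>y2\<in>?supp. F y2 \<le> - gap")
      case True
      then obtain y2 where y2: "y2 \<in> ?supp" "F y2 \<le> - gap" by blast
      have "- gap / 2 \<in> F ` ?supp"
        using connectedD_interval[OF conn, of "F y2" "F y1" "- gap / 2"] y1 y2 gap by auto
      then obtain y where y: "y \<in> ?supp" "F y = - gap / 2" by auto
      then have "y \<in> V" unfolding V_def using gap by simp
      then show False using Vsupp y(1) by blast
    next
      case False
      then have all: "\<forall>y\<in>?supp. F y > - gap" by (auto simp: not_le)
      have "AE y in Q. y \<in> Uw"
        using AE_supp by (rule eventually_mono) (use all toUw in blast)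
      then have "measure Q Uw = 1" using Uw_sets by (subst Q.AE_in_set_eq_1[symmetric]) auto
      then show False using mUw sumI_lt by simp
    qed
  next
    case False
    then have all: "\<forall>y\<in>?supp. F y < 0" by (auto simp: not_le)
    have "AE y in Q. y \<notin> Uz"
      using AE_supp by (rule eventually_mono) (use all in \<open>auto simp: Uz_def F_def\<close>)
    then have "emeasure Q Uz = 0" using Uz_sets by (subst AE_iff_measurable[symmetric]) auto
    then have "measure Q Uz = 0" by (simp add: measure_def)
    then show False using mUz sumI_pos by simp
  qed
qed

lemma uniq:
  assumes mz: "\<And>i. i \<in> {1..N} \<Longrightarrow> measure Q (S i z) = p i"
    and mw: "\<And>i. i \<in> {1..N} \<Longrightarrow> measure Q (S i w) = p i"
    and ez: "z \<in> extensional {1..N}" and ew: "w \<in> extensional {1..N}"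
    and z1: "z 1 = 0" and w1: "w 1 = 0"
  shows "z = w"
proof (rule extensionalityI[OF ez ew])
  fix i assume i: "i \<in> {1..N}"
  show "z i = w i"
  proof (rule ccontr)
    assume "z i \<noteq> w i"
    then consider "w i - z i > 0" | "z i - w i > 0" by linarith
    then show False
    proof cases
      case 1 show False by (rule uniq_aux[OF mz mw z1 w1 i 1])
    next
      case 2 show False by (rule uniq_aux[OF mw mz w1 z1 i 2])
    qed
  qed
qed

end

context otset begin

lemma main_result: "\<exists>z0. Opt0 (\<lambda>u v. h (u - v)) N x p Q = {z0}"
proof -
  obtain zs where zs_ext: "zs \<in> extensional {1..N}" and zs1: "zs 1 = 0"
    and mzs: "\<And>i. i \<in> {1..N} \<Longrightarrow> measure Q (S i zs) = p i"
    using exists_balanced by blast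
  let ?OT = "OT_cost (\<lambda>u v. h (u - v)) P Q"
  have up: "?OT \<le> ennreal (g zs)" and gnn: "g zs \<ge> 0" using upper[OF mzs] by auto
  have low: "ennreal (g w) \<le> ?OT" for w
    unfolding OT_cost_def by (rule INF_greatest) (rule weak_duality)
  have OT_eq: "?OT = ennreal (g zs)" using up low[of zs] by (rule antisym)
  have gdual: "g_dual (\<lambda>u v. h (u - v)) N x p Q w = g w" for w unfolding g_def ..
  have "Opt0 (\<lambda>u v. h (u - v)) N x p Q = {zs}"
  proof
    show "{zs} \<subseteq> Opt0 (\<lambda>u v. h (u - v)) N x p Q"
      unfolding Opt0_def gdual using zs_ext zs1 OT_eq gnn by simp
    show "Opt0 (\<lambda>u v. h (u - v)) N x p Q \<subseteq> {zs}"
    proof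
      fix z assume "z \<in> Opt0 (\<lambda>u v. h (u - v)) N x p Q"
      then have z_ext: "z \<in> extensional {1..N}" and z1: "z 1 = 0" and gz: "enn2real ?OT = g z"
        unfolding Opt0_def gdual by auto
      have gz': "g z = g zs" using gz OT_eq gnn by simp
      have opt: "g w \<le> g z" for w
      proof -
        have "ennreal (g w) \<le> ennreal (g zs)" using low[of w] OT_eq by simp
        then have "g w \<le> g zs" using gnn by (simp add: ennreal_le_iff)
        then show ?thesis using gz' by simp
      qed
      have mz: "measure Q (S i z) = p i" if "i \<in> {1..N}" for i
        by (rule global_opt_S[OF opt that])
      have "z = zs" by (rule uniq[OF mz mzs z_ext zs_ext z1 zs1])
      then show "z \<in> {zs}" by simp
    qed
  qed
  then show ?thesis by blast
qed

end

theorem lemma6: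
  fixes N :: nat and x :: "nat \<Rightarrow> 'a::euclidean_space" and p :: "nat \<Rightarrow> real"
    and Q :: "'a measure" and h :: "'a \<Rightarrow> real"
  assumes N: "N \<ge> 1"
    and distinct: "inj_on x {1..N}"
    and p_pos: "\<forall>k\<in>{1..N}. p k > 0"
    and p_sum: "(\<Sum>k\<in>{1..N}. p k) = 1"
    and Q_prob: "prob_space Q"
    and Q_borel: "sets Q = sets borel"
    and Q_ac: "absolutely_continuous lborel Q"
    and supp_conn: "connected (measure_support Q)"
    and supp_bdry: "frontier (measure_support Q) \<in> null_sets lborel"
    and h_nonneg: "\<forall>v. h v \<ge> 0"
    and h_diff: "\<forall>v. h differentiable (at v)"
    and A1: "strictly_convex_on UNIV h"
    and A2: "cond_A2 h"
    and A3: "filterlim (\<lambda>v. h v / norm v) at_top at_infinity"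
    and integr: "\<forall>i\<in>{1..N}. integrable Q (\<lambda>y. h (x i - y))"
  shows "\<exists>z0. Opt0 (\<lambda>u v. h (u - v)) N x p Q = {z0}"
proof -
  have h_cont: "continuous_on UNIV h"
    using h_diff by (intro differentiable_imp_continuous_on differentiable_at_imp_differentiable_on) auto
  interpret otset N x p Q h
    using N distinct p_pos p_sum Q_prob Q_borel Q_ac supp_conn h_nonneg h_cont A1 integr
    unfolding otset_def by blast
  show ?thesis by (rule main_result)
qed


end
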